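(* Let $\mathbb F$ be a field, $q\in\mathbb F$, $f,g\in\mathbb F[h]$. The associated graded algebra $\mathrm{Gr}(\mathcal H_q(f,g))=\bigoplus_{\alpha,\beta\ge 0}\mathcal F_{(\alpha,\beta)}/\mathcal F^-_{(\alpha,\beta)}$ is generated by the images $\bar x,\bar y,\bar h$ of $x,y,h$ subject to the relations $\bar h\bar x=\bar x f(\bar h)$, $\bar y\bar h=f(\bar h)\bar y$, $\bar y\bar x=q\bar x\bar y$; that is, $\mathrm{Gr}(\mathcal H_q(f,g))\cong\mathcal H_q(f,0)$.
   Context: For a field $\mathbb F$, $q\in\mathbb F$ and $f,g\in\mathbb F[h]$, $\mathcal H_q(f,g)$ is the unital associative $\mathbb F$-algebra generated by $x,y,h$ with relations $hx=xf(h)$, $yh=f(h)y$, $yx-qxy=g(h)$. Every element $a$ can be written uniquely as $a=\sum_{i,j\ge 0}x^ip_{ij}(h)y^j$ with $p_{ij}\in\mathbb F[h]$. For $a\ne0$, $\mathrm{Deg}(a)$ is the lexicographic maximum of $\{(i,j):p_{ij}\ne 0\}$, $\mathrm{Deg}(0)=(-\infty,-\infty)$; $\mathcal F_{(\alpha,\beta)}=\{a:\mathrm{Deg}(a)\le(\alpha,\beta)\}$ and $\mathcal F^-_{(\alpha,\beta)}=\{a:\mathrm{Deg}(a)<(\alpha,\beta)\}$ in lexicographic order; these form an increasing $\mathbb Z_{\ge0}^2$-filtration of $\mathcal H_q(f,g)$. *)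

theory Defs
  imports "HOL-Algebra.Ring" "HOL-Computational_Algebra.Polynomial"
    "HOL-Library.Product_Lexorder" "HOL-Library.Option_ord"
begin

definition is_F_algebra :: "('a, 'm) ring_scheme \<Rightarrow> ('k::field \<Rightarrow> 'a) \<Rightarrow> bool" where
  "is_F_algebra R emb \<longleftrightarrow> ring R \<and>
     (\<forall>c. emb c \<in> carrier R) \<and>
     (\<forall>c d. emb (c + d) = emb c \<oplus>\<^bsub>R\<^esub> emb d) \<and>
     (\<forall>c d. emb (c * d) = emb c \<otimes>\<^bsub>R\<^esub> emb d) \<and>
     emb 1 = \<one>\<^bsub>R\<^esub> \<and>
     (\<forall>c. \<forall>a\<in>carrier R. emb c \<otimes>\<^bsub>R\<^esub> a = a \<otimes>\<^bsub>R\<^esub> emb c)"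

definition peval :: "('a, 'm) ring_scheme \<Rightarrow> ('k::field \<Rightarrow> 'a) \<Rightarrow> 'k poly \<Rightarrow> 'a \<Rightarrow> 'a" where
  "peval R emb p a = finsum R (\<lambda>i. emb (coeff p i) \<otimes>\<^bsub>R\<^esub> (a [^]\<^bsub>R\<^esub> (i::nat))) {..degree p}"

definition psupp :: "(nat \<Rightarrow> nat \<Rightarrow> 'k::zero) \<Rightarrow> (nat \<times> nat) set" where
  "psupp P = {(i, j). P i j \<noteq> 0}"

definition nf :: "('a, 'm) ring_scheme \<Rightarrow> ('k::field \<Rightarrow> 'a) \<Rightarrow> 'a \<Rightarrow> 'a \<Rightarrow> 'a
                   \<Rightarrow> (nat \<Rightarrow> nat \<Rightarrow> 'k poly) \<Rightarrow> 'a" where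
  "nf R emb x y h P = finsum R
     (\<lambda>(i, j). (x [^]\<^bsub>R\<^esub> (i::nat)) \<otimes>\<^bsub>R\<^esub> peval R emb (P i j) h \<otimes>\<^bsub>R\<^esub> (y [^]\<^bsub>R\<^esub> (j::nat)))
     (psupp P)"

text \<open>R (with scalars emb and distinguished elements x, y, h) is (a copy of) the algebra
  H_q(f,g): it is an F-algebra, x, y, h satisfy the defining relations
  hx = x f(h), yh = f(h) y, yx - q xy = g(h), and every element has a unique expression
  sum_{i,j} x^i p_ij(h) y^j.  (Such an algebra is canonically isomorphic to the algebra
  presented by these generators and relations.)\<close>
definition is_Hq :: "('a, 'm) ring_scheme \<Rightarrow> ('k::field \<Rightarrow> 'a) \<Rightarrow> 'k \<Rightarrow> 'k poly \<Rightarrow> 'k poly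
                     \<Rightarrow> 'a \<Rightarrow> 'a \<Rightarrow> 'a \<Rightarrow> bool" where
  "is_Hq R emb q f g x y h \<longleftrightarrow>
     is_F_algebra R emb \<and> x \<in> carrier R \<and> y \<in> carrier R \<and> h \<in> carrier R \<and>
     h \<otimes>\<^bsub>R\<^esub> x = x \<otimes>\<^bsub>R\<^esub> peval R emb f h \<and>
     y \<otimes>\<^bsub>R\<^esub> h = peval R emb f h \<otimes>\<^bsub>R\<^esub> y \<and>
     y \<otimes>\<^bsub>R\<^esub> x = (emb q \<otimes>\<^bsub>R\<^esub> x \<otimes>\<^bsub>R\<^esub> y) \<oplus>\<^bsub>R\<^esub> peval R emb g h \<and>
     (\<forall>a\<in>carrier R. \<exists>!P. finite (psupp P) \<and> a = nf R emb x y h P)"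

definition nfcoef :: "('a, 'm) ring_scheme \<Rightarrow> ('k::field \<Rightarrow> 'a) \<Rightarrow> 'a \<Rightarrow> 'a \<Rightarrow> 'a
                       \<Rightarrow> 'a \<Rightarrow> nat \<Rightarrow> nat \<Rightarrow> 'k poly" where
  "nfcoef R emb x y h a = (THE P. finite (psupp P) \<and> a = nf R emb x y h P)"

text \<open>Deg(a) is the lexicographic maximum of the support (pairs are ordered
  lexicographically by Product_Lexorder); None plays the role of (-inf,-inf), and
  None is below every Some d (Option_ord).\<close>
definition Deg :: "('a, 'm) ring_scheme \<Rightarrow> ('k::field \<Rightarrow> 'a) \<Rightarrow> 'a \<Rightarrow> 'a \<Rightarrow> 'a
                    \<Rightarrow> 'a \<Rightarrow> (nat \<times> nat) option" where
  "Deg R emb x y h a =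
     (let S = psupp (nfcoef R emb x y h a) in if S = {} then None else Some (Max S))"

definition Filt :: "('a, 'm) ring_scheme \<Rightarrow> ('k::field \<Rightarrow> 'a) \<Rightarrow> 'a \<Rightarrow> 'a \<Rightarrow> 'a
                     \<Rightarrow> nat \<times> nat \<Rightarrow> 'a set" where
  "Filt R emb x y h d = {a \<in> carrier R. Deg R emb x y h a \<le> Some d}"

definition Filtm :: "('a, 'm) ring_scheme \<Rightarrow> ('k::field \<Rightarrow> 'a) \<Rightarrow> 'a \<Rightarrow> 'a \<Rightarrow> 'a
                      \<Rightarrow> nat \<times> nat \<Rightarrow> 'a set" where
  "Filtm R emb x y h d = {a \<in> carrier R. Deg R emb x y h a < Some d}"

definition grcls :: "('a, 'm) ring_scheme \<Rightarrow> ('k::field \<Rightarrow> 'a) \<Rightarrow> 'a \<Rightarrow> 'a \<Rightarrow> 'a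
                      \<Rightarrow> nat \<times> nat \<Rightarrow> 'a \<Rightarrow> 'a set" where
  "grcls R emb x y h d a = {a \<oplus>\<^bsub>R\<^esub> b | b. b \<in> Filtm R emb x y h d}"

text \<open>Elements of Gr = direct sum of the F_d / F^-_d: finitely supported families of
  classes.\<close>
definition gr_carrier :: "('a, 'm) ring_scheme \<Rightarrow> ('k::field \<Rightarrow> 'a) \<Rightarrow> 'a \<Rightarrow> 'a \<Rightarrow> 'a
                           \<Rightarrow> (nat \<times> nat \<Rightarrow> 'a set) set" where
  "gr_carrier R emb x y h =
     {G. (\<forall>d. G d \<in> grcls R emb x y h d ` Filt R emb x y h d) \<and>
         finite {d. G d \<noteq> Filtm R emb x y h d}}"

definition rep :: "'a set \<Rightarrow> 'a" where
  "rep C = (SOME a. a \<in> C)"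

definition gr_zero :: "('a, 'm) ring_scheme \<Rightarrow> ('k::field \<Rightarrow> 'a) \<Rightarrow> 'a \<Rightarrow> 'a \<Rightarrow> 'a
                        \<Rightarrow> nat \<times> nat \<Rightarrow> 'a set" where
  "gr_zero R emb x y h = (\<lambda>d. Filtm R emb x y h d)"

definition gr_hom :: "('a, 'm) ring_scheme \<Rightarrow> ('k::field \<Rightarrow> 'a) \<Rightarrow> 'a \<Rightarrow> 'a \<Rightarrow> 'a
                       \<Rightarrow> nat \<times> nat \<Rightarrow> 'a \<Rightarrow> nat \<times> nat \<Rightarrow> 'a set" where
  "gr_hom R emb x y h d a =
     (\<lambda>e. if e = d then grcls R emb x y h d a else Filtm R emb x y h e)"

definition gr_add :: "('a, 'm) ring_scheme \<Rightarrow> ('k::field \<Rightarrow> 'a) \<Rightarrow> 'a \<Rightarrow> 'a \<Rightarrow> 'a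
                       \<Rightarrow> (nat \<times> nat \<Rightarrow> 'a set) \<Rightarrow> (nat \<times> nat \<Rightarrow> 'a set) \<Rightarrow> nat \<times> nat \<Rightarrow> 'a set" where
  "gr_add R emb x y h G H =
     (\<lambda>d. grcls R emb x y h d (rep (G d) \<oplus>\<^bsub>R\<^esub> rep (H d)))"

text \<open>Product induced by F_(a,b) F_(c,d) \<subseteq> F_(a+c,b+d):
  (G H)_(a,b) = sum over (a1+a2, b1+b2) = (a,b) of the classes of rep(G_(a1,b1)) rep(H_(a2,b2)).\<close>
definition gr_mul :: "('a, 'm) ring_scheme \<Rightarrow> ('k::field \<Rightarrow> 'a) \<Rightarrow> 'a \<Rightarrow> 'a \<Rightarrow> 'a
                       \<Rightarrow> (nat \<times> nat \<Rightarrow> 'a set) \<Rightarrow> (nat \<times> nat \<Rightarrow> 'a set) \<Rightarrow> nat \<times> nat \<Rightarrow> 'a set" where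
  "gr_mul R emb x y h G H =
     (\<lambda>(a, b). grcls R emb x y h (a, b)
        (finsum R (\<lambda>((a1, b1), (a2, b2)). rep (G (a1, b1)) \<otimes>\<^bsub>R\<^esub> rep (H (a2, b2)))
           {((a1, b1), (a2, b2)). a1 + a2 = a \<and> b1 + b2 = b}))"

definition Gr :: "('a, 'm) ring_scheme \<Rightarrow> ('k::field \<Rightarrow> 'a) \<Rightarrow> 'a \<Rightarrow> 'a \<Rightarrow> 'a
                   \<Rightarrow> (nat \<times> nat \<Rightarrow> 'a set) ring" where
  "Gr R emb x y h =
     \<lparr> carrier = gr_carrier R emb x y h,
       monoid.mult = gr_mul R emb x y h,
       monoid.one = gr_hom R emb x y h (0, 0) \<one>\<^bsub>R\<^esub>,
       ring.zero = gr_zero R emb x y h,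
       ring.add = gr_add R emb x y h \<rparr>"

definition gr_emb :: "('a, 'm) ring_scheme \<Rightarrow> ('k::field \<Rightarrow> 'a) \<Rightarrow> 'a \<Rightarrow> 'a \<Rightarrow> 'a
                       \<Rightarrow> 'k \<Rightarrow> nat \<times> nat \<Rightarrow> 'a set" where
  "gr_emb R emb x y h c = gr_hom R emb x y h (0, 0) (emb c)"

end

theory Submission
  imports Defs
begin

locale hq =
  fixes R :: "'a ring" (structure) and emb :: "'k::field \<Rightarrow> 'a"
    and q :: 'k and f g :: "'k poly" and x y h :: 'a
  assumes H: "is_Hq R emb q f g x y h"

lemma (in hq) Rring: "ring R" using H unfolding is_Hq_def is_F_algebra_def by blast

sublocale hq \<subseteq> ring R by (rule Rring)

context hq begin
declare nat_pow_Suc[simp del]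

lemma emb_closed[simp]: "emb c \<in> carrier R" using H unfolding is_Hq_def is_F_algebra_def by blast
lemma emb_add: "emb (c + d) = emb c \<oplus> emb d" using H unfolding is_Hq_def is_F_algebra_def by blast
lemma emb_mult: "emb (c * d) = emb c \<otimes> emb d" using H unfolding is_Hq_def is_F_algebra_def by blast
lemma emb_one[simp]: "emb 1 = \<one>" using H unfolding is_Hq_def is_F_algebra_def by blast
lemma emb_comm: "a \<in> carrier R \<Longrightarrow> emb c \<otimes> a = a \<otimes> emb c" using H unfolding is_Hq_def is_F_algebra_def by blast
lemma xyh[simp]: "x \<in> carrier R" "y \<in> carrier R" "h \<in> carrier R" using H unfolding is_Hq_def by blast+
lemma rel_hx: "h \<otimes> x = x \<otimes> peval R emb f h" using H unfolding is_Hq_def by blast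
lemma rel_yh: "y \<otimes> h = peval R emb f h \<otimes> y" using H unfolding is_Hq_def by blast
lemma rel_yx: "y \<otimes> x = (emb q \<otimes> x \<otimes> y) \<oplus> peval R emb g h" using H unfolding is_Hq_def by blast
lemma uniq: "a \<in> carrier R \<Longrightarrow> \<exists>!P. finite (psupp P) \<and> a = nf R emb x y h P" using H unfolding is_Hq_def by blast

lemma emb_zero[simp]: "emb 0 = \<zero>"
proof -
  have "emb 0 = emb 0 \<oplus> emb 0" using emb_add[of 0 0] by simp
  then show ?thesis using add.l_cancel_one'[of "emb 0" "emb 0"] by simp
qed

lemma emb_neg: "emb (- c) = \<ominus> emb c"
proof -
  have "emb (- c) \<oplus> emb c = \<zero>" using emb_add[of "-c" c] by simp
  then show ?thesis by (simp add: minus_equality)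
qed

lemma peval_closed[simp]: "a \<in> carrier R \<Longrightarrow> peval R emb p a \<in> carrier R"
  unfolding peval_def by (rule finsum_closed) auto

lemma peval_ext: assumes "degree p \<le> n" "a \<in> carrier R"
  shows "peval R emb p a = (\<Oplus>i\<in>{..n}. emb (coeff p i) \<otimes> a [^] i)"
  using assms(1)
proof (induction n)
  case 0 then show ?case by (simp add: peval_def)
next
  case (Suc n)
  show ?case
  proof (cases "degree p \<le> n")
    case True
    have "coeff p (Suc n) = 0" using True by (simp add: coeff_eq_0)
    then show ?thesis using Suc True assms(2) by (simp add: finsum_Suc)
  next
    case False
    then have "degree p = Suc n" using Suc by simp
    then show ?thesis by (simp add: peval_def)
  qed
qed

lemma peval_pCons: assumes "a \<in> carrier R"
  shows "peval R emb (pCons c p) a = emb c \<oplus> a \<otimes> peval R emb p a"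
proof -
  have d: "degree (pCons c p) \<le> Suc (degree p)" by (simp add: degree_pCons_le)
  have "peval R emb (pCons c p) a = (\<Oplus>i\<in>{..Suc (degree p)}. emb (coeff (pCons c p) i) \<otimes> a [^] i)"
    by (rule peval_ext[OF d assms])
  also have "\<dots> = (\<Oplus>i\<in>{..degree p}. emb (coeff p i) \<otimes> a [^] Suc i) \<oplus> emb c"
    using assms by (subst finsum_Suc2) auto
  also have "(\<Oplus>i\<in>{..degree p}. emb (coeff p i) \<otimes> a [^] Suc i) = (\<Oplus>i\<in>{..degree p}. a \<otimes> (emb (coeff p i) \<otimes> a [^] i))"
  proof (rule finsum_cong')
    fix i assume "i \<in> {..degree p}"
    show "emb (coeff p i) \<otimes> a [^] Suc i = a \<otimes> (emb (coeff p i) \<otimes> a [^] i)"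
    proof -
      have "emb (coeff p i) \<otimes> a [^] Suc i = (emb (coeff p i) \<otimes> a) \<otimes> a [^] i"
        unfolding nat_pow_Suc2[OF assms] using assms by (simp add: m_assoc)
      also have "\<dots> = (a \<otimes> emb (coeff p i)) \<otimes> a [^] i" using assms emb_comm by simp
      finally show ?thesis using assms by (simp add: m_assoc)
    qed
  qed (use assms in auto)
  also have "\<dots> = a \<otimes> peval R emb p a"
    unfolding peval_def using assms by (subst finsum_rdistr) auto
  finally show ?thesis using assms by (simp add: a_comm)
qed

lemma peval_0[simp]: "a \<in> carrier R \<Longrightarrow> peval R emb 0 a = \<zero>"
  by (simp add: peval_def)

lemma peval_const[simp]: "a \<in> carrier R \<Longrightarrow> peval R emb [:c:] a = emb c"
  by (simp add: peval_pCons)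

lemma peval_1[simp]: "a \<in> carrier R \<Longrightarrow> peval R emb 1 a = \<one>"
  by (simp add: one_pCons peval_pCons del: pCons_one)

lemma peval_add: assumes "a \<in> carrier R"
  shows "peval R emb (p + r) a = peval R emb p a \<oplus> peval R emb r a"
proof (induction p arbitrary: r rule: pCons_induct)
  case 0 then show ?case using assms by simp
next
  case (pCons c p)
  obtain d r' where r: "r = pCons d r'" by (rule pCons_cases)
  show ?case using assms pCons.IH[of r'] unfolding r
    by (simp add: peval_pCons emb_add r_distr a_ac)
qed

lemma peval_smult: assumes "a \<in> carrier R"
  shows "peval R emb (smult c p) a = emb c \<otimes> peval R emb p a"
proof (induction p rule: pCons_induct)
  case 0 then show ?case using assms by simp
next
  case (pCons d p)
  have c: "a \<otimes> (emb c \<otimes> peval R emb p a) = emb c \<otimes> (a \<otimes> peval R emb p a)"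
    using assms by (simp add: m_assoc[symmetric] emb_comm[of a c])
  show ?case using assms pCons.IH c
    by (simp add: peval_pCons emb_mult r_distr)
qed

lemma peval_mult: assumes "a \<in> carrier R"
  shows "peval R emb (p * r) a = peval R emb p a \<otimes> peval R emb r a"
proof (induction p rule: pCons_induct)
  case 0 then show ?case using assms by simp
next
  case (pCons d p)
  have "pCons d p * r = smult d r + pCons 0 (p * r)" by simp
  then show ?case using assms pCons.IH
    by (simp add: peval_pCons peval_add peval_smult l_distr m_assoc)
qed

lemma peval_neg: assumes "a \<in> carrier R"
  shows "peval R emb (- p) a = \<ominus> peval R emb p a"
proof -
  have "peval R emb (- p) a \<oplus> peval R emb p a = \<zero>"
    using peval_add[OF assms, of "-p" p] assms by simp
  then show ?thesis using assms by (simp add: minus_equality)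
qed

lemma peval_diff: assumes "a \<in> carrier R"
  shows "peval R emb (p - r) a = peval R emb p a \<ominus> peval R emb r a"
  using peval_add[OF assms, of p "-r"] peval_neg[OF assms, of r] by (simp add: a_minus_def)

lemma peval_shift: assumes "a \<in> carrier R" "b \<in> carrier R" "z \<in> carrier R" "a \<otimes> z = z \<otimes> b"
  shows "peval R emb p a \<otimes> z = z \<otimes> peval R emb p b"
proof (induction p rule: pCons_induct)
  case 0 then show ?case using assms by simp
next
  case (pCons d p)
  have "(emb d \<oplus> a \<otimes> peval R emb p a) \<otimes> z = emb d \<otimes> z \<oplus> a \<otimes> (peval R emb p a \<otimes> z)"
    using assms by (simp add: l_distr m_assoc)
  also have "\<dots> = z \<otimes> emb d \<oplus> (a \<otimes> z) \<otimes> peval R emb p b"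
    using assms pCons.IH by (simp add: emb_comm m_assoc[symmetric])
  also have "\<dots> = z \<otimes> (emb d \<oplus> b \<otimes> peval R emb p b)"
    using assms by (simp add: r_distr m_assoc)
  finally show ?case using assms by (simp add: peval_pCons)
qed

lemma peval_shift2: assumes "a \<in> carrier R" "b \<in> carrier R" "z \<in> carrier R" "z \<otimes> a = b \<otimes> z"
  shows "z \<otimes> peval R emb p a = peval R emb p b \<otimes> z"
proof (induction p rule: pCons_induct)
  case 0 then show ?case using assms by simp
next
  case (pCons d p)
  have "z \<otimes> (emb d \<oplus> a \<otimes> peval R emb p a) = z \<otimes> emb d \<oplus> (z \<otimes> a) \<otimes> peval R emb p a"
    using assms by (simp add: r_distr m_assoc[symmetric] del: assms(4))
  also have "\<dots> = emb d \<otimes> z \<oplus> (b \<otimes> z) \<otimes> peval R emb p a"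
    using assms by (simp add: emb_comm)
  also have "\<dots> = emb d \<otimes> z \<oplus> b \<otimes> (z \<otimes> peval R emb p a)"
    using assms by (simp add: m_assoc)
  also have "\<dots> = emb d \<otimes> z \<oplus> b \<otimes> (peval R emb p b \<otimes> z)"
    using pCons.IH by simp
  also have "\<dots> = (emb d \<oplus> b \<otimes> peval R emb p b) \<otimes> z"
    using assms by (simp add: l_distr m_assoc)
  finally show ?case using assms by (simp add: peval_pCons)
qed

lemma peval_pcompose: assumes "a \<in> carrier R"
  shows "peval R emb (pcompose p s) a = peval R emb p (peval R emb s a)"
proof (induction p rule: pCons_induct)
  case 0 then show ?case using assms by simp
next
  case (pCons d p)
  show ?case using assms pCons.IH
    by (simp add: pcompose_pCons peval_pCons peval_add peval_mult)
qed

abbreviation "pv p \<equiv> peval R emb p h"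

lemma pv_x: "pv p \<otimes> x = x \<otimes> pv (pcompose p f)"
  by (subst peval_pcompose) (auto intro!: peval_shift simp: rel_hx)

lemma y_pv: "y \<otimes> pv p = pv (pcompose p f) \<otimes> y"
  by (subst peval_pcompose) (auto intro!: peval_shift2 simp: rel_yh)

lemma pv_xn: "\<exists>p'. pv p \<otimes> x [^] (n::nat) = x [^] n \<otimes> pv p'"
proof (induction n arbitrary: p)
  case 0 show ?case by (rule exI[of _ p]) simp
next
  case (Suc n)
  obtain p' where p': "pv (pcompose p f) \<otimes> x [^] n = x [^] n \<otimes> pv p'" using Suc by blast
  have "pv p \<otimes> x [^] Suc n = (pv p \<otimes> x) \<otimes> x [^] n" unfolding nat_pow_Suc2[OF xyh(1)] by (simp add: m_assoc)
  also have "\<dots> = x \<otimes> (pv (pcompose p f) \<otimes> x [^] n)" by (simp add: pv_x m_assoc)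
  also have "\<dots> = x [^] Suc n \<otimes> pv p'" unfolding nat_pow_Suc2[OF xyh(1)] by (simp add: p' m_assoc)
  finally show ?case by blast
qed

lemma yn_pv: "\<exists>p'. y [^] (n::nat) \<otimes> pv p = pv p' \<otimes> y [^] n"
proof (induction n arbitrary: p)
  case 0 show ?case by (rule exI[of _ p]) simp
next
  case (Suc n)
  obtain p' where p': "y [^] n \<otimes> pv (pcompose p f) = pv p' \<otimes> y [^] n" using Suc by blast
  have "y [^] Suc n \<otimes> pv p = y [^] n \<otimes> (y \<otimes> pv p)" by (simp add: m_assoc)
  also have "\<dots> = (y [^] n \<otimes> pv (pcompose p f)) \<otimes> y" by (simp add: y_pv m_assoc)
  also have "\<dots> = pv p' \<otimes> y [^] Suc n" by (simp add: p' m_assoc)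
  finally show ?case by blast
qed

end


context hq begin

definition mn :: "nat \<Rightarrow> nat \<Rightarrow> 'k poly \<Rightarrow> 'a" where
  "mn i j p = x [^] i \<otimes> pv p \<otimes> y [^] j"

lemma mn_closed[simp]: "mn i j p \<in> carrier R" by (simp add: mn_def)
lemma mn_0[simp]: "mn i j 0 = \<zero>" by (simp add: mn_def)
lemma mn_add: "mn i j (p + r) = mn i j p \<oplus> mn i j r"
  by (simp add: mn_def peval_add l_distr r_distr)
lemma mn_neg: "mn i j (- p) = \<ominus> mn i j p"
proof -
  have "mn i j (- p) \<oplus> mn i j p = \<zero>" using mn_add[of i j "-p" p] by simp
  then show ?thesis by (simp add: minus_equality)
qed

abbreviation "NF P \<equiv> nf R emb x y h P"
abbreviation "NC a \<equiv> nfcoef R emb x y h a"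

lemma nf_closed[simp]: "NF P \<in> carrier R"
  unfolding nf_def by (rule finsum_closed) auto

lemma nf_on: assumes "finite A" "psupp P \<subseteq> A"
  shows "NF P = finsum R (\<lambda>(i,j). mn i j (P i j)) (A)"
  unfolding nf_def
proof (rule add.finprod_mono_neutral_cong_left)
  show "\<And>ij. ij \<in> A - psupp P \<Longrightarrow> (\<lambda>(i, j). mn i j (P i j)) ij = \<zero>"
    by (auto simp: psupp_def)
qed (use assms in \<open>auto simp: mn_def\<close>)

lemma psupp_add: "psupp (\<lambda>i j. P i j + Q i j) \<subseteq> psupp P \<union> psupp Q"
  for P Q :: "nat \<Rightarrow> nat \<Rightarrow> 'k poly"
  by (auto simp: psupp_def)

lemma nf_add: assumes "finite (psupp P)" "finite (psupp Q)"
  shows "NF P \<oplus> NF Q = NF (\<lambda>i j. P i j + Q i j)"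
proof -
  let ?A = "psupp P \<union> psupp Q"
  have fA: "finite ?A" using assms by simp
  have "NF P \<oplus> NF Q = finsum R (\<lambda>(i,j). mn i j (P i j)) (?A) \<oplus> finsum R (\<lambda>(i,j). mn i j (Q i j)) (?A)"
    using nf_on[OF fA, of P] nf_on[OF fA, of Q] by auto
  also have "\<dots> = (\<Oplus>ij\<in>?A. (\<lambda>(i,j). mn i j (P i j)) ij \<oplus> (\<lambda>(i,j). mn i j (Q i j)) ij)"
    by (rule finsum_addf[symmetric]) auto
  also have "\<dots> = finsum R (\<lambda>(i,j). mn i j (P i j + Q i j)) (?A)"
    by (rule finsum_cong') (auto simp: mn_add)
  also have "\<dots> = NF (\<lambda>i j. P i j + Q i j)"
    using nf_on[OF fA psupp_add[of P Q]] by simp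
  finally show ?thesis .
qed

lemma nf_zero: "NF (\<lambda>i j. 0) = \<zero>"
  by (simp add: nf_def psupp_def)

lemma nf_neg: assumes "finite (psupp P)"
  shows "NF (\<lambda>i j. - P i j) = \<ominus> NF P"
proof -
  have f2: "finite (psupp (\<lambda>i j. - P i j))" using assms by (simp add: psupp_def)
  have "NF (\<lambda>i j. - P i j) \<oplus> NF P = \<zero>"
    using nf_add[OF f2 assms] nf_zero by simp
  then show ?thesis by (simp add: minus_equality)
qed

lemma nfcoef_nf: assumes "finite (psupp P)" shows "NC (NF P) = P"
  unfolding nfcoef_def
  by (rule the1_equality) (use uniq[OF nf_closed[of P]] assms in auto)

lemma nf_nfcoef: assumes "a \<in> carrier R"
  shows "finite (psupp (NC a)) \<and> a = NF (NC a)"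
  unfolding nfcoef_def by (rule theI'[OF uniq[OF assms]])

inductive_set spn :: "(nat \<times> nat) set \<Rightarrow> 'a set" for S where
  spn_zero: "\<zero> \<in> spn S"
| spn_mn: "(i, j) \<in> S \<Longrightarrow> mn i j p \<in> spn S"
| spn_add: "a \<in> spn S \<Longrightarrow> b \<in> spn S \<Longrightarrow> a \<oplus> b \<in> spn S"

lemma spn_carrier: "a \<in> spn S \<Longrightarrow> a \<in> carrier R"
  by (induction rule: spn.induct) auto

lemma spn_nf: "a \<in> spn S \<Longrightarrow> \<exists>P. finite (psupp P) \<and> psupp P \<subseteq> S \<and> a = NF P"
proof (induction rule: spn.induct)
  case spn_zero then show ?case by (intro exI[of _ "\<lambda>i j. 0"]) (auto simp: nf_zero psupp_def)
next
  case (spn_mn i j p)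
  let ?P = "\<lambda>a b. if (a, b) = (i, j) then p else 0"
  have s: "psupp ?P \<subseteq> {(i,j)}" by (auto simp: psupp_def split: if_splits)
  have "NF ?P = finsum R (\<lambda>(a,b). mn a b (?P a b)) ({(i,j)})" by (rule nf_on[OF _ s]) simp
  also have "\<dots> = mn i j p" by simp
  finally show ?case using s spn_mn by (intro exI[of _ ?P]) (auto intro: finite_subset)
next
  case (spn_add a b)
  then obtain P Q where PQ: "finite (psupp P)" "psupp P \<subseteq> S" "a = NF P"
      "finite (psupp Q)" "psupp Q \<subseteq> S" "b = NF Q" by blast
  show ?case
    using nf_add[OF PQ(1,4)] PQ psupp_add[of P Q]
    by (intro exI[of _ "\<lambda>i j. P i j + Q i j"]) (auto intro: finite_subset)
qed

lemma finsum_spn: assumes "finite A" "A \<subseteq> S"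
  shows "finsum R (\<lambda>(i,j). mn i j (P i j)) (A) \<in> spn S"
  using assms
proof (induction A rule: finite_induct)
  case empty then show ?case by (simp add: spn_zero)
next
  case (insert a A)
  obtain i j where a: "a = (i, j)" by fastforce
  have "finsum R (\<lambda>(i,j). mn i j (P i j)) (insert a A) = mn i j (P i j) \<oplus> finsum R (\<lambda>(i,j). mn i j (P i j)) (A)"
    using insert(1,2) a by (subst finsum_insert) auto
  moreover have "mn i j (P i j) \<in> spn S" using insert(4) a by (intro spn_mn) auto
  moreover have "finsum R (\<lambda>(i,j). mn i j (P i j)) A \<in> spn S" using insert by blast
  ultimately show ?case by (simp add: spn_add)
qed

lemma nf_spn: "finite (psupp P) \<Longrightarrow> psupp P \<subseteq> S \<Longrightarrow> NF P \<in> spn S"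
  using finsum_spn nf_on by auto

lemma spn_iff: "a \<in> spn S \<longleftrightarrow> a \<in> carrier R \<and> psupp (NC a) \<subseteq> S"
proof
  assume "a \<in> spn S"
  then obtain P where "finite (psupp P)" "psupp P \<subseteq> S" "a = NF P" using spn_nf by blast
  then show "a \<in> carrier R \<and> psupp (NC a) \<subseteq> S" using nfcoef_nf by auto
next
  assume "a \<in> carrier R \<and> psupp (NC a) \<subseteq> S"
  then show "a \<in> spn S" using nf_nfcoef[of a] nf_spn[of "NC a" S] by auto
qed

lemma Filt_eq: "Filt R emb x y h d = spn {e. e \<le> d}"
proof -
  have "Deg R emb x y h a \<le> Some d \<longleftrightarrow> psupp (NC a) \<subseteq> {e. e \<le> d}" if "a \<in> carrier R" for a
  proof -
    have fin: "finite (psupp (NC a))" using nf_nfcoef[OF that] by blast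
    show ?thesis
    proof (cases "psupp (NC a) = {}")
      case True then show ?thesis by (simp add: Deg_def)
    next
      case False then show ?thesis using fin by (simp add: Deg_def Max_le_iff subset_eq)
    qed
  qed
  then have "a \<in> Filt R emb x y h d \<longleftrightarrow> a \<in> spn {e. e \<le> d}" for a
    using spn_iff[of a] by (auto simp: Filt_def)
  then show ?thesis by blast
qed

lemma Filtm_eq: "Filtm R emb x y h d = spn {e. e < d}"
proof -
  have "Deg R emb x y h a < Some d \<longleftrightarrow> psupp (NC a) \<subseteq> {e. e < d}" if "a \<in> carrier R" for a
  proof -
    have fin: "finite (psupp (NC a))" using nf_nfcoef[OF that] by blast
    show ?thesis
    proof (cases "psupp (NC a) = {}")
      case True then show ?thesis by (simp add: Deg_def)
    next
      case False then show ?thesis using fin by (simp add: Deg_def Max_less_iff subset_eq)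
    qed
  qed
  then have "a \<in> Filtm R emb x y h d \<longleftrightarrow> a \<in> spn {e. e < d}" for a
    using spn_iff[of a] by (auto simp: Filtm_def)
  then show ?thesis by blast
qed

lemma spn_neg: "a \<in> spn S \<Longrightarrow> \<ominus> a \<in> spn S"
proof (induction rule: spn.induct)
  case spn_zero then show ?case by (simp add: spn.spn_zero)
next
  case (spn_mn i j p) then show ?case using spn.spn_mn[of i j S "-p"] by (simp add: mn_neg)
next
  case (spn_add a b) then show ?case
    by (simp add: minus_add spn_carrier spn.spn_add)
qed

lemma spn_minus: "a \<in> spn S \<Longrightarrow> b \<in> spn S \<Longrightarrow> a \<ominus> b \<in> spn S"
  by (simp add: a_minus_def spn_add spn_neg)

lemma spn_mono: assumes "S \<subseteq> T" shows "a \<in> spn S \<Longrightarrow> a \<in> spn T"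
  by (induction rule: spn.induct) (use assms in \<open>auto intro: spn.intros\<close>)

lemma spn_finsum: "finite A \<Longrightarrow> (\<And>i. i \<in> A \<Longrightarrow> F i \<in> spn S) \<Longrightarrow> finsum R F A \<in> spn S"
proof (induction A rule: finite_induct)
  case empty then show ?case by (simp add: spn_zero)
next
  case (insert a A)
  have "F \<in> A \<rightarrow> carrier R" using insert spn_carrier by blast
  moreover have "F a \<in> carrier R" using insert spn_carrier by blast
  ultimately have "finsum R F (insert a A) = F a \<oplus> finsum R F A"
    using insert(1,2) by (subst finsum_insert) auto
  then show ?case using insert by (simp add: spn_add)
qed

lemma spn_lmul: assumes "L \<in> carrier R" "\<And>i j p. (i, j) \<in> S \<Longrightarrow> L \<otimes> mn i j p \<in> spn T"
  shows "a \<in> spn S \<Longrightarrow> L \<otimes> a \<in> spn T"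
proof (induction rule: spn.induct)
  case spn_zero then show ?case using assms by (simp add: spn.spn_zero)
next
  case (spn_mn i j p) then show ?case using assms by simp
next
  case (spn_add a b) then show ?case using assms by (simp add: r_distr spn_carrier spn.spn_add)
qed

lemma spn_rmul: assumes "L \<in> carrier R" "\<And>i j p. (i, j) \<in> S \<Longrightarrow> mn i j p \<otimes> L \<in> spn T"
  shows "a \<in> spn S \<Longrightarrow> a \<otimes> L \<in> spn T"
proof (induction rule: spn.induct)
  case spn_zero then show ?case using assms by (simp add: spn.spn_zero)
next
  case (spn_mn i j p) then show ?case using assms by simp
next
  case (spn_add a b) then show ?case using assms by (simp add: l_distr spn_carrier spn.spn_add)
qed

lemma spn_mul: assumes "\<And>i j p k l r. (i, j) \<in> A \<Longrightarrow> (k, l) \<in> B \<Longrightarrow> mn i j p \<otimes> mn k l r \<in> spn C"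
    and "a \<in> spn A" "b \<in> spn B"
  shows "a \<otimes> b \<in> spn C"
proof (rule spn_rmul[OF spn_carrier[OF assms(3)] _ assms(2)])
  fix i j p assume "(i, j) \<in> A"
  then show "mn i j p \<otimes> b \<in> spn C"
    by (intro spn_lmul[OF mn_closed _ assms(3)]) (use assms(1) in auto)
qed

end


context hq begin

lemma pow1: "a \<in> carrier R \<Longrightarrow> a [^] (1::nat) = a"
  by (simp add: nat_pow_Suc[of a 0])

lemma mn_split1: "mn i j p = (x [^] i \<otimes> pv p) \<otimes> y [^] j" by (simp add: mn_def)
lemma mn_split2: "mn i j p = x [^] i \<otimes> (pv p \<otimes> y [^] j)" by (simp add: mn_def m_assoc)

lemma xn_mn: "\<exists>s. (x [^] (n::nat) \<otimes> pv p) \<otimes> mn i j r = mn (n + i) j s"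
proof -
  obtain p' where p': "pv p \<otimes> x [^] i = x [^] i \<otimes> pv p'" using pv_xn by blast
  have "(x [^] n \<otimes> pv p) \<otimes> mn i j r = x [^] n \<otimes> ((pv p \<otimes> x [^] i) \<otimes> (pv r \<otimes> y [^] j))"
    by (simp add: mn_def m_assoc)
  also have "\<dots> = (x [^] n \<otimes> x [^] i) \<otimes> ((pv p' \<otimes> pv r) \<otimes> y [^] j)"
    by (simp add: p' m_assoc)
  also have "\<dots> = mn (n + i) j (p' * r)"
    by (simp add: mn_def nat_pow_mult peval_mult m_assoc)
  finally show ?thesis by blast
qed

lemma mn_ry: "\<exists>s. mn i j p \<otimes> (pv r \<otimes> y [^] (l::nat)) = mn i (j + l) s"
proof -
  obtain r' where r': "y [^] j \<otimes> pv r = pv r' \<otimes> y [^] j" using yn_pv by blast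
  have "mn i j p \<otimes> (pv r \<otimes> y [^] l) = (x [^] i \<otimes> pv p) \<otimes> ((y [^] j \<otimes> pv r) \<otimes> y [^] l)"
    by (simp add: mn_def m_assoc)
  also have "\<dots> = (x [^] i \<otimes> (pv p \<otimes> pv r')) \<otimes> (y [^] j \<otimes> y [^] l)"
    by (simp add: r' m_assoc)
  also have "\<dots> = mn i (j + l) (p * r')"
    by (simp add: mn_def nat_pow_mult peval_mult m_assoc)
  finally show ?thesis by blast
qed

abbreviation "XX k \<equiv> spn {e. fst e < k}"

lemma X_lmul: "a \<in> XX k \<Longrightarrow> (x [^] (n::nat) \<otimes> pv p) \<otimes> a \<in> XX (n + k)"
proof (rule spn_lmul[where S="{e. fst e < k}"])
  fix i j :: nat and r assume "(i, j) \<in> {e. fst e < k}"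
  moreover obtain s where "(x [^] n \<otimes> pv p) \<otimes> mn i j r = mn (n + i) j s" using xn_mn by blast
  ultimately show "(x [^] n \<otimes> pv p) \<otimes> mn i j r \<in> XX (n + k)" by (auto intro: spn_mn)
qed auto

lemma X_rmul': "a \<in> XX k \<Longrightarrow> a \<otimes> (pv r \<otimes> y [^] (l::nat)) \<in> XX k"
proof (rule spn_rmul[where S="{e. fst e < k}"])
  fix i j :: nat and p assume "(i, j) \<in> {e. fst e < k}"
  moreover obtain s where "mn i j p \<otimes> (pv r \<otimes> y [^] l) = mn i (j + l) s" using mn_ry by blast
  ultimately show "mn i j p \<otimes> (pv r \<otimes> y [^] l) \<in> XX k"
    by (auto intro: spn_mn)
qed auto

lemma X_carrier: "a \<in> XX k \<Longrightarrow> a \<in> carrier R" by (rule spn_carrier)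

lemma yxa: "\<exists>c w. w \<in> XX a \<and> y \<otimes> x [^] a = mn a 1 c \<oplus> w"
proof (induction a)
  case 0
  have "y \<otimes> x [^] (0::nat) = mn 0 1 1 \<oplus> \<zero>" by (simp add: mn_def pow1)
  then show ?case by (blast intro: spn_zero)
next
  case (Suc a)
  then obtain c w where w: "w \<in> XX a" "y \<otimes> x [^] a = mn a 1 c \<oplus> w" by blast
  have wc: "w \<in> carrier R" using w(1) by (rule X_carrier)
  have eqx: "emb q \<otimes> x = x [^] (1::nat) \<otimes> pv [:q:]" by (simp add: pow1 emb_comm)
  obtain g' where g': "pv g \<otimes> x [^] a = x [^] a \<otimes> pv g'" using pv_xn by blast
  obtain s where s: "(x [^] (1::nat) \<otimes> pv [:q:]) \<otimes> mn a 1 c = mn (1 + a) 1 s" using xn_mn by blast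
  have w2: "(x [^] (1::nat) \<otimes> pv [:q:]) \<otimes> w \<in> XX (1 + a)" using X_lmul[OF w(1)] .
  have g2: "mn a 0 g' \<in> XX (Suc a)" by (rule spn_mn) simp
  have "y \<otimes> x [^] Suc a = (y \<otimes> x) \<otimes> x [^] a" unfolding nat_pow_Suc2[OF xyh(1)] by (simp add: m_assoc)
  also have "\<dots> = (emb q \<otimes> x) \<otimes> (y \<otimes> x [^] a) \<oplus> pv g \<otimes> x [^] a"
    by (simp add: rel_yx l_distr m_assoc)
  also have "\<dots> = (x [^] (1::nat) \<otimes> pv [:q:]) \<otimes> mn a 1 c \<oplus> (x [^] (1::nat) \<otimes> pv [:q:]) \<otimes> w \<oplus> mn a 0 g'"
    unfolding eqx w(2) g' using wc by (simp add: r_distr mn_def)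
  also have "\<dots> = mn (Suc a) 1 s \<oplus> ((x [^] (1::nat) \<otimes> pv [:q:]) \<otimes> w \<oplus> mn a 0 g')"
    using s wc by (simp add: a_assoc)
  finally show ?case using w2 g2 by (auto intro!: spn_add)
qed

lemma y_X: "w \<in> XX k \<Longrightarrow> y \<otimes> w \<in> XX k"
proof (rule spn_lmul[where S="{e. fst e < k}"])
  fix a b :: nat and s assume ab: "(a, b) \<in> {e. fst e < k}"
  obtain c w where w: "w \<in> XX a" "y \<otimes> x [^] a = mn a 1 c \<oplus> w" using yxa by blast
  obtain s' where s': "mn a 1 c \<otimes> (pv s \<otimes> y [^] b) = mn a (1 + b) s'" using mn_ry by blast
  have "y \<otimes> mn a b s = (y \<otimes> x [^] a) \<otimes> (pv s \<otimes> y [^] b)" by (simp add: mn_def m_assoc)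
  also have "\<dots> = mn a (1 + b) s' \<oplus> w \<otimes> (pv s \<otimes> y [^] b)"
    unfolding w(2) s'[symmetric] using X_carrier[OF w(1)] by (simp add: l_distr)
  finally have e: "y \<otimes> mn a b s = mn a (1 + b) s' \<oplus> w \<otimes> (pv s \<otimes> y [^] b)" .
  have "w \<otimes> (pv s \<otimes> y [^] b) \<in> XX a" using X_rmul'[OF w(1)] .
  then have "w \<otimes> (pv s \<otimes> y [^] b) \<in> XX k" using ab by (auto intro: spn_mono[of "{e. fst e < a}"])
  moreover have "mn a (1 + b) s' \<in> XX k" using ab by (auto intro: spn_mn)
  ultimately show "y \<otimes> mn a b s \<in> XX k" unfolding e by (rule spn_add[rotated])
qed auto

lemma yjxk: "\<exists>c w. w \<in> XX k \<and> y [^] (j::nat) \<otimes> x [^] (k::nat) = mn k j c \<oplus> w"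
proof (induction j)
  case 0
  have "y [^] (0::nat) \<otimes> x [^] k = mn k 0 1 \<oplus> \<zero>" by (simp add: mn_def)
  then show ?case by (blast intro: spn_zero)
next
  case (Suc j)
  then obtain c w where w: "w \<in> XX k" "y [^] j \<otimes> x [^] k = mn k j c \<oplus> w" by blast
  obtain c' w' where w': "w' \<in> XX k" "y \<otimes> x [^] k = mn k 1 c' \<oplus> w'" using yxa by blast
  obtain s where s: "mn k 1 c' \<otimes> (pv c \<otimes> y [^] j) = mn k (1 + j) s" using mn_ry by blast
  have wc: "w \<in> carrier R" "w' \<in> carrier R" using w(1) w'(1) X_carrier by auto
  have "y [^] Suc j \<otimes> x [^] k = y \<otimes> (mn k j c \<oplus> w)"
    unfolding nat_pow_Suc2[OF xyh(2)] by (simp add: m_assoc w(2)[symmetric])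
  also have "\<dots> = (y \<otimes> x [^] k) \<otimes> (pv c \<otimes> y [^] j) \<oplus> y \<otimes> w"
    using wc by (simp add: r_distr mn_def m_assoc)
  also have "\<dots> = mn k (Suc j) s \<oplus> (w' \<otimes> (pv c \<otimes> y [^] j) \<oplus> y \<otimes> w)"
    unfolding w'(2) using wc s by (simp add: l_distr a_assoc)
  finally show ?case using X_rmul'[OF w'(1)] y_X[OF w(1)] by (blast intro: spn_add)
qed

lemma mn_mul: "mn i j p \<otimes> mn k l r \<in> spn {e. e \<le> (i + k, j + l)}"
proof -
  obtain c w where w: "w \<in> XX k" "y [^] j \<otimes> x [^] k = mn k j c \<oplus> w" using yjxk by blast
  have wc: "w \<in> carrier R" using w(1) X_carrier by auto
  obtain s where s: "mn k j c \<otimes> (pv r \<otimes> y [^] l) = mn k (j + l) s" using mn_ry by blast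
  obtain s' where s': "(x [^] i \<otimes> pv p) \<otimes> mn k (j + l) s = mn (i + k) (j + l) s'" using xn_mn by blast
  have "mn i j p \<otimes> mn k l r = (x [^] i \<otimes> pv p) \<otimes> ((y [^] j \<otimes> x [^] k) \<otimes> (pv r \<otimes> y [^] l))"
    by (simp add: mn_def m_assoc)
  also have "\<dots> = mn (i + k) (j + l) s' \<oplus> (x [^] i \<otimes> pv p) \<otimes> (w \<otimes> (pv r \<otimes> y [^] l))"
    unfolding w(2) using wc s s' by (simp add: l_distr r_distr)
  finally have e: "mn i j p \<otimes> mn k l r = mn (i + k) (j + l) s' \<oplus> (x [^] i \<otimes> pv p) \<otimes> (w \<otimes> (pv r \<otimes> y [^] l))" .
  have "(x [^] i \<otimes> pv p) \<otimes> (w \<otimes> (pv r \<otimes> y [^] l)) \<in> XX (i + k)"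
    by (rule X_lmul[OF X_rmul'[OF w(1)]])
  then have "(x [^] i \<otimes> pv p) \<otimes> (w \<otimes> (pv r \<otimes> y [^] l)) \<in> spn {e. e \<le> (i + k, j + l)}"
    by (rule spn_mono[rotated]) (auto simp: prod_le_def)
  moreover have "mn (i + k) (j + l) s' \<in> spn {e. e \<le> (i + k, j + l)}" by (rule spn_mn) simp
  ultimately show ?thesis unfolding e by (rule spn_add[rotated])
qed

definition pl :: "nat \<times> nat \<Rightarrow> nat \<times> nat \<Rightarrow> nat \<times> nat" where
  "pl d e = (fst d + fst e, snd d + snd e)"

abbreviation "Fl d \<equiv> spn {e. e \<le> d}"
abbreviation "Fm d \<equiv> spn {e. e < d}"

lemma Fl_mul: assumes "a \<in> Fl d1" "b \<in> Fl d2" shows "a \<otimes> b \<in> Fl (pl d1 d2)"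
proof (rule spn_mul[OF _ assms])
  fix i j p k l r assume "(i, j) \<in> {e. e \<le> d1}" "(k, l) \<in> {e. e \<le> d2}"
  then have le: "(i + k, j + l) \<le> pl d1 d2" by (auto simp: prod_le_def pl_def)
  have "{e. e \<le> (i + k, j + l)} \<subseteq> {e. e \<le> pl d1 d2}" using order_trans[OF _ le] by blast
  then show "mn i j p \<otimes> mn k l r \<in> Fl (pl d1 d2)"
    by (rule spn_mono[OF _ mn_mul])
qed

lemma Fm_mul1: assumes "a \<in> Fm d1" "b \<in> Fl d2" shows "a \<otimes> b \<in> Fm (pl d1 d2)"
proof (rule spn_mul[OF _ assms])
  fix i j p k l r assume "(i, j) \<in> {e. e < d1}" "(k, l) \<in> {e. e \<le> d2}"
  then have le: "(i + k, j + l) < pl d1 d2" by (auto simp: prod_le_def prod_less_def pl_def)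
  have "{e. e \<le> (i + k, j + l)} \<subseteq> {e. e < pl d1 d2}" using le_less_trans[OF _ le] by blast
  then show "mn i j p \<otimes> mn k l r \<in> Fm (pl d1 d2)"
    by (rule spn_mono[OF _ mn_mul])
qed

lemma Fm_mul2: assumes "a \<in> Fl d1" "b \<in> Fm d2" shows "a \<otimes> b \<in> Fm (pl d1 d2)"
proof (rule spn_mul[OF _ assms])
  fix i j p k l r assume "(i, j) \<in> {e. e \<le> d1}" "(k, l) \<in> {e. e < d2}"
  then have le: "(i + k, j + l) < pl d1 d2" by (auto simp: prod_le_def prod_less_def pl_def)
  have "{e. e \<le> (i + k, j + l)} \<subseteq> {e. e < pl d1 d2}" using le_less_trans[OF _ le] by blast
  then show "mn i j p \<otimes> mn k l r \<in> Fm (pl d1 d2)"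
    by (rule spn_mono[OF _ mn_mul])
qed

lemma Fm_Fl: "a \<in> Fm d \<Longrightarrow> a \<in> Fl d"
  by (rule spn_mono[rotated]) auto

end


context hq begin

lemma Fm_carrier: "a \<in> Fm d \<Longrightarrow> a \<in> carrier R" by (rule spn_carrier)
lemma Fl_carrier: "a \<in> Fl d \<Longrightarrow> a \<in> carrier R" by (rule spn_carrier)

definition eqm :: "nat \<times> nat \<Rightarrow> 'a \<Rightarrow> 'a \<Rightarrow> bool" where
  "eqm d a b \<longleftrightarrow> a \<in> carrier R \<and> b \<in> carrier R \<and> a \<ominus> b \<in> Fm d"

lemma eqm_refl: "a \<in> carrier R \<Longrightarrow> eqm d a a"
  by (simp add: eqm_def r_neg a_minus_def spn_zero)

lemma eqm_sym: "eqm d a b \<Longrightarrow> eqm d b a"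
proof -
  assume e: "eqm d a b"
  then have "\<ominus> (a \<ominus> b) \<in> Fm d" by (simp add: eqm_def spn_neg)
  moreover have "\<ominus> (a \<ominus> b) = b \<ominus> a" using e unfolding eqm_def by algebra
  ultimately show ?thesis using e by (simp add: eqm_def)
qed

lemma eqm_trans: "eqm d a b \<Longrightarrow> eqm d b c \<Longrightarrow> eqm d a c"
proof -
  assume e: "eqm d a b" "eqm d b c"
  then have "(a \<ominus> b) \<oplus> (b \<ominus> c) \<in> Fm d" by (simp add: eqm_def spn_add)
  moreover have "(a \<ominus> b) \<oplus> (b \<ominus> c) = a \<ominus> c" using e unfolding eqm_def by algebra
  ultimately show ?thesis using e by (simp add: eqm_def)
qed

lemma eqm_add: "eqm d a a' \<Longrightarrow> eqm d b b' \<Longrightarrow> eqm d (a \<oplus> b) (a' \<oplus> b')"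
proof -
  assume e: "eqm d a a'" "eqm d b b'"
  then have "(a \<ominus> a') \<oplus> (b \<ominus> b') \<in> Fm d" by (simp add: eqm_def spn_add)
  moreover have "(a \<ominus> a') \<oplus> (b \<ominus> b') = (a \<oplus> b) \<ominus> (a' \<oplus> b')" using e unfolding eqm_def by algebra
  ultimately show ?thesis using e by (simp add: eqm_def)
qed

lemma eqm_neg: "eqm d a a' \<Longrightarrow> eqm d (\<ominus> a) (\<ominus> a')"
proof -
  assume e: "eqm d a a'"
  then have "\<ominus> (a \<ominus> a') \<in> Fm d" by (simp add: eqm_def spn_neg)
  moreover have "\<ominus> (a \<ominus> a') = (\<ominus> a) \<ominus> (\<ominus> a')" using e unfolding eqm_def by algebra
  ultimately show ?thesis using e by (simp add: eqm_def)
qed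

lemma eqm_zero_iff: "a \<in> carrier R \<Longrightarrow> eqm d a \<zero> \<longleftrightarrow> a \<in> Fm d"
  by (simp add: eqm_def a_minus_def)

lemma eqm_mul: assumes "eqm d1 u u'" "eqm d2 v v'" "u' \<in> Fl d1" "v \<in> Fl d2"
  shows "eqm (pl d1 d2) (u \<otimes> v) (u' \<otimes> v')"
proof -
  have c: "u \<in> carrier R" "u' \<in> carrier R" "v \<in> carrier R" "v' \<in> carrier R"
    using assms(1,2) by (auto simp: eqm_def)
  have "(u \<ominus> u') \<otimes> v \<in> Fm (pl d1 d2)" using assms by (intro Fm_mul1) (auto simp: eqm_def)
  moreover have "u' \<otimes> (v \<ominus> v') \<in> Fm (pl d1 d2)" using assms by (intro Fm_mul2) (auto simp: eqm_def)
  ultimately have "(u \<ominus> u') \<otimes> v \<oplus> u' \<otimes> (v \<ominus> v') \<in> Fm (pl d1 d2)" by (rule spn_add)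
  moreover have "(u \<ominus> u') \<otimes> v \<oplus> u' \<otimes> (v \<ominus> v') = u \<otimes> v \<ominus> u' \<otimes> v'" using c by algebra
  ultimately show ?thesis using c by (simp add: eqm_def)
qed

lemma eqm_finsum: assumes "finite A" "\<And>s. s \<in> A \<Longrightarrow> eqm d (F s) (F' s)"
  shows "eqm d (finsum R F A) (finsum R F' A)"
  using assms
proof (induction A rule: finite_induct)
  case empty then show ?case by (simp add: eqm_refl)
next
  case (insert a A)
  have c: "F \<in> A \<rightarrow> carrier R" "F' \<in> A \<rightarrow> carrier R" "F a \<in> carrier R" "F' a \<in> carrier R"
    using insert.prems by (auto simp: eqm_def)
  have "finsum R F (insert a A) = F a \<oplus> finsum R F A" using insert.hyps c by (simp add: finsum_insert)
  moreover have "finsum R F' (insert a A) = F' a \<oplus> finsum R F' A" using insert.hyps c by (simp add: finsum_insert)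
  ultimately show ?case using insert by (simp add: eqm_add)
qed

lemma finsum_single: assumes "finite A" "u \<in> carrier R"
  shows "finsum R (\<lambda>e. if e = d then u else \<zero>) A = (if d \<in> A then u else \<zero>)"
  using assms
proof (induction A rule: finite_induct)
  case empty then show ?case by simp
next
  case (insert a A)
  have "finsum R (\<lambda>e. if e = d then u else \<zero>) (insert a A) = (if a = d then u else \<zero>) \<oplus> finsum R (\<lambda>e. if e = d then u else \<zero>) A"
    using insert assms by (subst finsum_insert) auto
  then show ?case using insert assms by auto
qed

abbreviation "C d a \<equiv> grcls R emb x y h d a"

lemma C_alt: "C d a = {a \<oplus> b | b. b \<in> Fm d}" by (simp add: grcls_def Filtm_eq)

lemma mem_C: assumes "a \<in> carrier R" shows "c \<in> C d a \<longleftrightarrow> eqm d c a"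
proof
  assume "c \<in> C d a"
  then obtain b where b: "b \<in> Fm d" "c = a \<oplus> b" by (auto simp: C_alt)
  have bc: "b \<in> carrier R" using b(1) by (rule Fm_carrier)
  have "c \<ominus> a = b" using b(2) bc assms by simp algebra
  then show "eqm d c a" using b bc assms by (simp add: eqm_def)
next
  assume e: "eqm d c a"
  then have "c = a \<oplus> (c \<ominus> a)" "c \<ominus> a \<in> Fm d" unfolding eqm_def by (auto, algebra)
  then show "c \<in> C d a" by (auto simp: C_alt)
qed

lemma C_eq: assumes "eqm d a b" shows "C d a = C d b"
proof -
  have c: "a \<in> carrier R" "b \<in> carrier R" using assms by (auto simp: eqm_def)
  have "c \<in> C d a \<longleftrightarrow> c \<in> C d b" for c
    using mem_C[OF c(1)] mem_C[OF c(2)] assms eqm_trans eqm_sym by blast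
  then show ?thesis by blast
qed

lemma C_eq_iff: assumes "a \<in> carrier R" "b \<in> carrier R" shows "C d a = C d b \<longleftrightarrow> eqm d a b"
  using C_eq mem_C[OF assms(2), of a] mem_C[OF assms(1), of a] eqm_refl[OF assms(1)] by blast

lemma rep_C: assumes "a \<in> carrier R" shows "eqm d (rep (C d a)) a"
proof -
  have "a \<in> C d a" using mem_C[OF assms] eqm_refl[OF assms] by blast
  then have "rep (C d a) \<in> C d a" unfolding rep_def by (rule someI)
  then show ?thesis using mem_C[OF assms] by blast
qed

lemma C_zero: "C d \<zero> = Fm d"
proof -
  have "\<zero> \<oplus> b = b" if "b \<in> Fm d" for b using Fm_carrier[OF that] by simp
  then show ?thesis unfolding C_alt by force
qed

lemma C_is_zero: assumes "a \<in> carrier R" shows "C d a = Fm d \<longleftrightarrow> a \<in> Fm d"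
  using C_eq_iff[OF assms zero_closed, of d] C_zero eqm_zero_iff[OF assms] by simp

abbreviation "GR \<equiv> Gr R emb x y h"

lemma GR_simps: "carrier GR = gr_carrier R emb x y h" "monoid.mult GR = gr_mul R emb x y h"
  "monoid.one GR = gr_hom R emb x y h (0, 0) \<one>" "ring.zero GR = gr_zero R emb x y h" "ring.add GR = gr_add R emb x y h"
  by (simp_all add: Gr_def)

lemma GR_carrier_iff: "G \<in> carrier GR \<longleftrightarrow> (\<forall>d. \<exists>a\<in>Fl d. G d = C d a) \<and> finite {d. G d \<noteq> Fm d}"
  by (simp add: GR_simps gr_carrier_def Filt_eq Filtm_eq image_iff)

lemma GrD: assumes "G \<in> carrier GR" shows "rep (G d) \<in> Fl d" "G d = C d (rep (G d))"
proof -
  obtain a where a: "a \<in> Fl d" "G d = C d a" using assms unfolding GR_carrier_iff by blast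
  have ac: "a \<in> carrier R" using a(1) by (rule Fl_carrier)
  have e: "eqm d (rep (G d)) a" using rep_C[OF ac] a(2) by simp
  have rc: "rep (G d) \<in> carrier R" using e by (simp add: eqm_def)
  have "rep (G d) = (rep (G d) \<ominus> a) \<oplus> a" using rc ac by algebra
  moreover have "rep (G d) \<ominus> a \<in> Fl d" using e Fm_Fl by (simp add: eqm_def)
  ultimately show "rep (G d) \<in> Fl d" using a(1) by (metis spn_add)
  show "G d = C d (rep (G d))" using a(2) C_eq[OF e] by simp
qed

lemma GrD_carrier: "G \<in> carrier GR \<Longrightarrow> rep (G d) \<in> carrier R"
  using GrD(1) Fl_carrier by blast

lemma GrD_fin: "G \<in> carrier GR \<Longrightarrow> finite {d. G d \<noteq> Fm d}"
  by (simp add: GR_carrier_iff)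

lemma Gr_is_zero: "G \<in> carrier GR \<Longrightarrow> G d = Fm d \<longleftrightarrow> rep (G d) \<in> Fm d"
  using GrD[of G d] C_is_zero GrD_carrier by metis

lemma GrI: assumes "\<And>d. F d \<in> Fl d" "finite {d. F d \<notin> Fm d}"
  shows "(\<lambda>d. C d (F d)) \<in> carrier GR"
  unfolding GR_carrier_iff
proof
  show "finite {d. C d (F d) \<noteq> Fm d}"
    using assms(2) C_is_zero Fl_carrier assms(1) by (smt (verit) Collect_cong)
qed (use assms in blast)

lemma Gr_eqI: assumes "G \<in> carrier GR" "H \<in> carrier GR" "\<And>d. eqm d (rep (G d)) (rep (H d))"
  shows "G = H"
proof
  fix d show "G d = H d" using GrD(2)[OF assms(1), of d] GrD(2)[OF assms(2), of d] C_eq[OF assms(3)] by simp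
qed

end


context hq begin

abbreviation "gadd \<equiv> gr_add R emb x y h"
abbreviation "gmul \<equiv> gr_mul R emb x y h"
abbreviation "gzero \<equiv> gr_zero R emb x y h"
abbreviation "ghom \<equiv> gr_hom R emb x y h"

lemma rG: "G \<in> carrier GR \<Longrightarrow> rep (G d) \<in> carrier R" by (rule GrD_carrier)

lemma gadd_eq: "gadd G H = (\<lambda>d. C d (rep (G d) \<oplus> rep (H d)))"
  by (simp add: gr_add_def)

lemma gzero_eq: "gzero = (\<lambda>d. C d \<zero>)"
  by (rule ext) (simp add: gr_zero_def C_zero Filtm_eq)

lemma rep_add: "G \<in> carrier GR \<Longrightarrow> H \<in> carrier GR \<Longrightarrow> eqm d (rep (gadd G H d)) (rep (G d) \<oplus> rep (H d))"
  unfolding gadd_eq by (rule rep_C) (simp add: rG)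

lemma rep_zero: "eqm d (rep (gzero d)) \<zero>"
  unfolding gzero_eq by (rule rep_C) simp

lemma add_closed_G: assumes "G \<in> carrier GR" "H \<in> carrier GR" shows "gadd G H \<in> carrier GR"
  unfolding gadd_eq
proof (rule GrI)
  show "rep (G d) \<oplus> rep (H d) \<in> Fl d" for d using GrD(1)[OF assms(1)] GrD(1)[OF assms(2)] by (rule spn_add)
  have "{d. rep (G d) \<oplus> rep (H d) \<notin> Fm d} \<subseteq> {d. G d \<noteq> Fm d} \<union> {d. H d \<noteq> Fm d}"
    using Gr_is_zero[OF assms(1)] Gr_is_zero[OF assms(2)] spn_add by blast
  then show "finite {d. rep (G d) \<oplus> rep (H d) \<notin> Fm d}"
    using GrD_fin[OF assms(1)] GrD_fin[OF assms(2)] by (rule finite_subset[OF _ finite_UnI])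
qed

lemma zero_closed_G: "gzero \<in> carrier GR"
  unfolding gzero_eq by (rule GrI) (simp_all add: spn.spn_zero)

definition gneg :: "(nat \<times> nat \<Rightarrow> 'a set) \<Rightarrow> nat \<times> nat \<Rightarrow> 'a set" where
  "gneg G = (\<lambda>d. C d (\<ominus> rep (G d)))"

lemma gneg_closed: assumes "G \<in> carrier GR" shows "gneg G \<in> carrier GR"
  unfolding gneg_def
proof (rule GrI)
  show "\<ominus> rep (G d) \<in> Fl d" for d using GrD(1)[OF assms] by (rule spn_neg)
  have "{d. \<ominus> rep (G d) \<notin> Fm d} \<subseteq> {d. G d \<noteq> Fm d}"
    using Gr_is_zero[OF assms] spn_neg by blast
  then show "finite {d. \<ominus> rep (G d) \<notin> Fm d}" using GrD_fin[OF assms] by (rule finite_subset)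
qed

lemma rep_gneg: "G \<in> carrier GR \<Longrightarrow> eqm d (rep (gneg G d)) (\<ominus> rep (G d))"
  unfolding gneg_def by (rule rep_C) (simp add: rG)

lemma GR_abelian: "abelian_group GR"
proof (rule abelian_groupI, unfold GR_simps(5,4) GR_simps(1)[symmetric])
  fix G H assume G: "G \<in> carrier GR" and H: "H \<in> carrier GR"
  show "gadd G H \<in> carrier GR" by (rule add_closed_G[OF G H])
  show "gadd G H = gadd H G"
  proof (rule Gr_eqI[OF add_closed_G[OF G H] add_closed_G[OF H G]])
    fix d
    have 1: "eqm d (rep (gadd G H d)) (rep (G d) \<oplus> rep (H d))" by (rule rep_add[OF G H])
    have 2: "eqm d (rep (gadd H G d)) (rep (H d) \<oplus> rep (G d))" by (rule rep_add[OF H G])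
    have 3: "rep (H d) \<oplus> rep (G d) = rep (G d) \<oplus> rep (H d)" using G H rG a_comm by blast
    show "eqm d (rep (gadd G H d)) (rep (gadd H G d))"
      using eqm_trans[OF 1 eqm_sym[OF 2[unfolded 3]]] .
  qed
next
  show "gzero \<in> carrier GR" by (rule zero_closed_G)
next
  fix G H K assume G: "G \<in> carrier GR" and H: "H \<in> carrier GR" and K: "K \<in> carrier GR"
  show "gadd (gadd G H) K = gadd G (gadd H K)"
  proof (rule Gr_eqI)
    show "gadd (gadd G H) K \<in> carrier GR" "gadd G (gadd H K) \<in> carrier GR"
      using G H K add_closed_G by auto
    fix d
    have "eqm d (rep (gadd (gadd G H) K d)) ((rep (G d) \<oplus> rep (H d)) \<oplus> rep (K d))"
      by (rule eqm_trans[OF rep_add eqm_add[OF rep_add eqm_refl]])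
         (use G H K add_closed_G rG in auto)
    moreover have "eqm d (rep (gadd G (gadd H K) d)) (rep (G d) \<oplus> (rep (H d) \<oplus> rep (K d)))"
      by (rule eqm_trans[OF rep_add eqm_add[OF eqm_refl rep_add]])
         (use G H K add_closed_G rG in auto)
    ultimately show "eqm d (rep (gadd (gadd G H) K d)) (rep (gadd G (gadd H K) d))"
      using G H K rG by (metis a_assoc eqm_sym eqm_trans)
  qed
next
  fix G assume G: "G \<in> carrier GR"
  show "gadd gzero G = G"
  proof (rule Gr_eqI[OF add_closed_G[OF zero_closed_G G] G])
    fix d
    have "eqm d (rep (gadd gzero G d)) (\<zero> \<oplus> rep (G d))"
      by (rule eqm_trans[OF rep_add eqm_add[OF rep_zero eqm_refl]])
         (use G zero_closed_G rG in auto)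
    then show "eqm d (rep (gadd gzero G d)) (rep (G d))" using G rG by simp
  qed
  show "\<exists>H\<in>carrier GR. gadd H G = gzero"
  proof (intro bexI[of _ "gneg G"])
    show "gadd (gneg G) G = gzero"
    proof (rule Gr_eqI[OF add_closed_G[OF gneg_closed[OF G] G] zero_closed_G])
      fix d
      have "eqm d (rep (gadd (gneg G) G d)) (\<ominus> rep (G d) \<oplus> rep (G d))"
        by (rule eqm_trans[OF rep_add eqm_add[OF rep_gneg eqm_refl]])
           (use G gneg_closed rG in auto)
      then have "eqm d (rep (gadd (gneg G) G d)) \<zero>" using G rG by (simp add: l_neg)
      then show "eqm d (rep (gadd (gneg G) G d)) (rep (gzero d))"
        using rep_zero eqm_sym eqm_trans by blast
    qed
  qed (rule gneg_closed[OF G])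
qed


lemma eqm_eq_trans[trans]: "eqm d a b \<Longrightarrow> b = c \<Longrightarrow> eqm d a c" by simp
lemmas eqm_trans'[trans] = eqm_trans

definition Spl :: "nat \<times> nat \<Rightarrow> ((nat \<times> nat) \<times> (nat \<times> nat)) set" where
  "Spl d = {(d1, d2). pl d1 d2 = d}"

lemma Spl_fin: "finite (Spl d)"
proof -
  have "Spl d \<subseteq> ({..fst d} \<times> {..snd d}) \<times> ({..fst d} \<times> {..snd d})"
    by (auto simp: Spl_def pl_def)
  then show ?thesis by (rule finite_subset) auto
qed

lemma Spl_pl: "s \<in> Spl d \<Longrightarrow> pl (fst s) (snd s) = d" by (auto simp: Spl_def)

definition MS where "MS G H d = finsum R (\<lambda>(d1, d2). rep (G d1) \<otimes> rep (H d2)) (Spl d)"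

lemma gmul_eq: "gmul G H = (\<lambda>d. C d (MS G H d))"
proof
  fix d :: "nat \<times> nat"
  obtain a b where d: "d = (a, b)" by fastforce
  have 1: "(\<lambda>((a1, b1), (a2, b2)). rep (G (a1, b1)) \<otimes> rep (H (a2, b2))) = (\<lambda>(d1, d2). rep (G d1) \<otimes> rep (H d2))"
    by auto
  have 2: "{((a1, b1), (a2, b2)). a1 + a2 = a \<and> b1 + b2 = b} = Spl (a, b)"
    by (auto simp: Spl_def pl_def)
  show "gmul G H d = C d (MS G H d)" unfolding d gr_mul_def MS_def by (simp add: 1 2)
qed

lemma MS_carrier: "G \<in> carrier GR \<Longrightarrow> H \<in> carrier GR \<Longrightarrow> MS G H d \<in> carrier R"
  unfolding MS_def by (rule finsum_closed) (auto simp: rG)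

lemma MS_cong: assumes "\<And>e. eqm e (rep (G e)) (gg e)" "\<And>e. gg e \<in> Fl e"
    "\<And>e. eqm e (rep (H e)) (kk e)" "\<And>e. rep (H e) \<in> Fl e"
  shows "eqm d (MS G H d) (finsum R (\<lambda>(d1, d2). gg d1 \<otimes> kk d2) (Spl d))"
  unfolding MS_def
proof (rule eqm_finsum[OF Spl_fin])
  fix s assume s: "s \<in> Spl d"
  obtain d1 d2 where s': "s = (d1, d2)" by (cases s)
  have "eqm (pl d1 d2) (rep (G d1) \<otimes> rep (H d2)) (gg d1 \<otimes> kk d2)"
    by (rule eqm_mul[OF assms(1) assms(3) assms(2) assms(4)])
  then show "eqm d ((\<lambda>(d1, d2). rep (G d1) \<otimes> rep (H d2)) s) ((\<lambda>(d1, d2). gg d1 \<otimes> kk d2) s)"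
    using Spl_pl[OF s] s' by simp
qed

lemma MS_Fl: assumes "G \<in> carrier GR" "H \<in> carrier GR" shows "MS G H d \<in> Fl d"
  unfolding MS_def
proof (rule spn_finsum[OF Spl_fin])
  fix s assume s: "s \<in> Spl d"
  obtain d1 d2 where s': "s = (d1, d2)" by (cases s)
  have "rep (G d1) \<otimes> rep (H d2) \<in> Fl (pl d1 d2)" using GrD(1)[OF assms(1)] GrD(1)[OF assms(2)] by (rule Fl_mul)
  then show "(\<lambda>(d1, d2). rep (G d1) \<otimes> rep (H d2)) s \<in> Fl d" using Spl_pl[OF s] s' by simp
qed

lemma MS_zero: assumes "G \<in> carrier GR" "H \<in> carrier GR"
  and "\<And>d1 d2. pl d1 d2 = d \<Longrightarrow> G d1 = Fm d1 \<or> H d2 = Fm d2"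
  shows "MS G H d \<in> Fm d"
  unfolding MS_def
proof (rule spn_finsum[OF Spl_fin])
  fix s assume s: "s \<in> Spl d"
  obtain d1 d2 where s': "s = (d1, d2)" by (cases s)
  have pd: "pl d1 d2 = d" using Spl_pl[OF s] s' by simp
  have "rep (G d1) \<otimes> rep (H d2) \<in> Fm (pl d1 d2)"
    using assms(3)[OF pd]
  proof
    assume "G d1 = Fm d1"
    then have "rep (G d1) \<in> Fm d1" using Gr_is_zero[OF assms(1)] by blast
    then show ?thesis using GrD(1)[OF assms(2)] by (rule Fm_mul1)
  next
    assume "H d2 = Fm d2"
    then have "rep (H d2) \<in> Fm d2" using Gr_is_zero[OF assms(2)] by blast
    then show ?thesis using GrD(1)[OF assms(1)] by (rule Fm_mul2[rotated])
  qed
  then show "(\<lambda>(d1, d2). rep (G d1) \<otimes> rep (H d2)) s \<in> Fm d" using pd s' by simp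
qed

lemma mul_closed_G: assumes "G \<in> carrier GR" "H \<in> carrier GR" shows "gmul G H \<in> carrier GR"
  unfolding gmul_eq
proof (rule GrI)
  show "MS G H d \<in> Fl d" for d by (rule MS_Fl[OF assms])
  let ?SG = "{d. G d \<noteq> Fm d}" and ?SH = "{d. H d \<noteq> Fm d}"
  have "{d. MS G H d \<notin> Fm d} \<subseteq> (\<lambda>(d1, d2). pl d1 d2) ` (?SG \<times> ?SH)"
  proof
    fix d assume "d \<in> {d. MS G H d \<notin> Fm d}"
    then have "\<not> (\<forall>d1 d2. pl d1 d2 = d \<longrightarrow> G d1 = Fm d1 \<or> H d2 = Fm d2)"
      using MS_zero[OF assms] by blast
    then show "d \<in> (\<lambda>(d1, d2). pl d1 d2) ` (?SG \<times> ?SH)" by force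
  qed
  moreover have "finite ((\<lambda>(d1, d2). pl d1 d2) ` (?SG \<times> ?SH))"
    using GrD_fin[OF assms(1)] GrD_fin[OF assms(2)] by simp
  ultimately show "finite {d. MS G H d \<notin> Fm d}" by (rule finite_subset)
qed

lemma rep_mul: "G \<in> carrier GR \<Longrightarrow> H \<in> carrier GR \<Longrightarrow> eqm d (rep (gmul G H d)) (MS G H d)"
  unfolding gmul_eq by (rule rep_C) (rule MS_carrier)

lemma rep_eqm_self: "G \<in> carrier GR \<Longrightarrow> eqm d (rep (G d)) (rep (G d))"
  by (rule eqm_refl) (rule rG)

lemma l_distr_G: assumes G: "G \<in> carrier GR" and H: "H \<in> carrier GR" and K: "K \<in> carrier GR"
  shows "gmul (gadd G H) K = gadd (gmul G K) (gmul H K)"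
proof (rule Gr_eqI)
  show "gmul (gadd G H) K \<in> carrier GR" "gadd (gmul G K) (gmul H K) \<in> carrier GR"
    using G H K by (auto intro: mul_closed_G add_closed_G)
  fix d
  have GH: "gadd G H \<in> carrier GR" using G H by (rule add_closed_G)
  have "eqm d (rep (gmul (gadd G H) K d)) (MS (gadd G H) K d)" by (rule rep_mul[OF GH K])
  also have "eqm d (MS (gadd G H) K d) (finsum R (\<lambda>(d1, d2). (rep (G d1) \<oplus> rep (H d1)) \<otimes> rep (K d2)) (Spl d))"
    by (rule MS_cong) (use G H K rep_add rep_eqm_self GrD(1) spn_add in auto)
  also have "finsum R (\<lambda>(d1, d2). (rep (G d1) \<oplus> rep (H d1)) \<otimes> rep (K d2)) (Spl d)
      = finsum R (\<lambda>s. (\<lambda>(d1, d2). rep (G d1) \<otimes> rep (K d2)) s \<oplus> (\<lambda>(d1, d2). rep (H d1) \<otimes> rep (K d2)) s) (Spl d)"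
    by (rule finsum_cong') (auto simp: l_distr rG G H K)
  also have "\<dots> = MS G K d \<oplus> MS H K d"
    unfolding MS_def by (rule finsum_addf) (auto simp: rG G H K)
  finally have 1: "eqm d (rep (gmul (gadd G H) K d)) (MS G K d \<oplus> MS H K d)" .
  have 2: "eqm d (rep (gadd (gmul G K) (gmul H K) d)) (MS G K d \<oplus> MS H K d)"
    by (rule eqm_trans[OF rep_add eqm_add[OF rep_mul rep_mul]]) (use G H K mul_closed_G in auto)
  show "eqm d (rep (gmul (gadd G H) K d)) (rep (gadd (gmul G K) (gmul H K) d))"
    using eqm_trans[OF 1 eqm_sym[OF 2]] .
qed

lemma r_distr_G: assumes G: "G \<in> carrier GR" and H: "H \<in> carrier GR" and K: "K \<in> carrier GR"
  shows "gmul K (gadd G H) = gadd (gmul K G) (gmul K H)"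
proof (rule Gr_eqI)
  show "gmul K (gadd G H) \<in> carrier GR" "gadd (gmul K G) (gmul K H) \<in> carrier GR"
    using G H K by (auto intro: mul_closed_G add_closed_G)
  fix d
  have GH: "gadd G H \<in> carrier GR" using G H by (rule add_closed_G)
  have "eqm d (rep (gmul K (gadd G H) d)) (MS K (gadd G H) d)" by (rule rep_mul[OF K GH])
  also have "eqm d (MS K (gadd G H) d) (finsum R (\<lambda>(d1, d2). rep (K d1) \<otimes> (rep (G d2) \<oplus> rep (H d2))) (Spl d))"
    by (rule MS_cong) (use G H K GH rep_add rep_eqm_self GrD(1) spn_add in auto)
  also have "finsum R (\<lambda>(d1, d2). rep (K d1) \<otimes> (rep (G d2) \<oplus> rep (H d2))) (Spl d)
      = finsum R (\<lambda>s. (\<lambda>(d1, d2). rep (K d1) \<otimes> rep (G d2)) s \<oplus> (\<lambda>(d1, d2). rep (K d1) \<otimes> rep (H d2)) s) (Spl d)"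
    by (rule finsum_cong') (auto simp: r_distr rG G H K)
  also have "\<dots> = MS K G d \<oplus> MS K H d"
    unfolding MS_def by (rule finsum_addf) (auto simp: rG G H K)
  finally have 1: "eqm d (rep (gmul K (gadd G H) d)) (MS K G d \<oplus> MS K H d)" .
  have 2: "eqm d (rep (gadd (gmul K G) (gmul K H) d)) (MS K G d \<oplus> MS K H d)"
    by (rule eqm_trans[OF rep_add eqm_add[OF rep_mul rep_mul]]) (use G H K mul_closed_G in auto)
  show "eqm d (rep (gmul K (gadd G H) d)) (rep (gadd (gmul K G) (gmul K H) d))"
    using eqm_trans[OF 1 eqm_sym[OF 2]] .
qed

end


context hq begin

lemma gzero_val: "gzero d = Fm d" by (simp add: gr_zero_def Filtm_eq)

lemma hom_eq: "ghom d a = (\<lambda>e. C e (if e = d then a else \<zero>))"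
  by (rule ext) (simp add: gr_hom_def Filtm_eq C_zero)

lemma hom_closed: assumes "a \<in> Fl d" shows "ghom d a \<in> carrier GR"
  unfolding hom_eq
proof (rule GrI)
  show "(if e = d then a else \<zero>) \<in> Fl e" for e using assms by (simp add: spn.spn_zero)
  have "{e. (if e = d then a else \<zero>) \<notin> Fm e} \<subseteq> {d}" by (auto simp: spn.spn_zero)
  then show "finite {e. (if e = d then a else \<zero>) \<notin> Fm e}" by (rule finite_subset) simp
qed

lemma rep_hom: assumes "a \<in> carrier R" shows "eqm e (rep (ghom d a e)) (if e = d then a else \<zero>)"
  unfolding hom_eq by (rule rep_C) (simp add: assms)

lemma hom_mul: assumes a: "a \<in> Fl d1" and b: "b \<in> Fl d2"
  shows "gmul (ghom d1 a) (ghom d2 b) = ghom (pl d1 d2) (a \<otimes> b)"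
proof (rule Gr_eqI)
  have ac: "a \<in> carrier R" and bc: "b \<in> carrier R" using a b Fl_carrier by auto
  have ab: "a \<otimes> b \<in> Fl (pl d1 d2)" using a b by (rule Fl_mul)
  show "gmul (ghom d1 a) (ghom d2 b) \<in> carrier GR"
    using hom_closed[OF a] hom_closed[OF b] by (rule mul_closed_G)
  show "ghom (pl d1 d2) (a \<otimes> b) \<in> carrier GR" using ab by (rule hom_closed)
  fix e
  let ?A = "\<lambda>e1. if e1 = d1 then a else \<zero>" and ?B = "\<lambda>e2. if e2 = d2 then b else \<zero>"
  have "eqm e (rep (gmul (ghom d1 a) (ghom d2 b) e)) (MS (ghom d1 a) (ghom d2 b) e)"
    using hom_closed[OF a] hom_closed[OF b] by (rule rep_mul)
  also have "eqm e (MS (ghom d1 a) (ghom d2 b) e) (finsum R (\<lambda>(e1, e2). ?A e1 \<otimes> ?B e2) (Spl e))"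
  proof (rule MS_cong)
    show "eqm e' (rep (ghom d1 a e')) (?A e')" for e' by (rule rep_hom[OF ac])
    show "eqm e' (rep (ghom d2 b e')) (?B e')" for e' by (rule rep_hom[OF bc])
    show "?A e' \<in> Fl e'" for e' using a by (simp add: spn.spn_zero)
    show "rep (ghom d2 b e') \<in> Fl e'" for e' by (rule GrD(1)[OF hom_closed[OF b]])
  qed
  also have "finsum R (\<lambda>(e1, e2). ?A e1 \<otimes> ?B e2) (Spl e) = finsum R (\<lambda>s. if s = (d1, d2) then a \<otimes> b else \<zero>) (Spl e)"
  proof (rule finsum_cong')
    fix s show "(\<lambda>(e1, e2). ?A e1 \<otimes> ?B e2) s = (if s = (d1, d2) then a \<otimes> b else \<zero>)"
      by (cases s) (simp add: ac bc)
  qed (simp_all add: ac bc)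
  also have "\<dots> = (if (d1, d2) \<in> Spl e then a \<otimes> b else \<zero>)"
    by (rule finsum_single[OF Spl_fin]) (simp add: ac bc)
  also have "\<dots> = (if e = pl d1 d2 then a \<otimes> b else \<zero>)" by (auto simp: Spl_def)
  finally have 1: "eqm e (rep (gmul (ghom d1 a) (ghom d2 b) e)) (if e = pl d1 d2 then a \<otimes> b else \<zero>)" .
  have 3: "eqm e (rep (ghom (pl d1 d2) (a \<otimes> b) e)) (if e = pl d1 d2 then a \<otimes> b else \<zero>)"
    by (rule rep_hom) (simp add: ac bc)
  show "eqm e (rep (gmul (ghom d1 a) (ghom d2 b) e)) (rep (ghom (pl d1 d2) (a \<otimes> b) e))"
    using eqm_trans[OF 1 eqm_sym[OF 3]] .
qed

lemma hom_add: assumes a: "a \<in> Fl d" and b: "b \<in> Fl d"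
  shows "gadd (ghom d a) (ghom d b) = ghom d (a \<oplus> b)"
proof (rule Gr_eqI)
  have ac: "a \<in> carrier R" and bc: "b \<in> carrier R" using a b Fl_carrier by auto
  show "gadd (ghom d a) (ghom d b) \<in> carrier GR" using hom_closed[OF a] hom_closed[OF b] by (rule add_closed_G)
  show "ghom d (a \<oplus> b) \<in> carrier GR" using a b by (intro hom_closed spn_add)
  fix e
  have 1: "eqm e (rep (gadd (ghom d a) (ghom d b) e)) ((if e = d then a else \<zero>) \<oplus> (if e = d then b else \<zero>))"
    by (rule eqm_trans[OF rep_add eqm_add[OF rep_hom rep_hom]])
       (use hom_closed a b ac bc in auto)
  have 2: "(if e = d then a else \<zero>) \<oplus> (if e = d then b else \<zero>) = (if e = d then a \<oplus> b else \<zero>)"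
    using ac bc by simp
  have 3: "eqm e (rep (ghom d (a \<oplus> b) e)) (if e = d then a \<oplus> b else \<zero>)"
    by (rule rep_hom) (simp add: ac bc)
  show "eqm e (rep (gadd (ghom d a) (ghom d b) e)) (rep (ghom d (a \<oplus> b) e))"
    using eqm_trans[OF 1[unfolded 2] eqm_sym[OF 3]] .
qed

lemma hom_zero: "ghom d \<zero> = gzero"
  by (simp add: hom_eq gzero_eq)

lemma rep_finsum: assumes "finite A" "F \<in> A \<rightarrow> carrier GR"
  shows "eqm d (rep (finsum GR F A d)) (finsum R (\<lambda>a. rep (F a d)) A)"
  using assms
proof (induction A rule: finite_induct)
  case empty
  interpret GA: abelian_group GR by (rule GR_abelian)
  show ?case using rep_zero by (simp add: GR_simps)
next
  case (insert a A)
  interpret GA: abelian_group GR by (rule GR_abelian)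
  have FA: "F \<in> A \<rightarrow> carrier GR" and Fa: "F a \<in> carrier GR" using insert.prems by auto
  have "finsum GR F (insert a A) = gadd (F a) (finsum GR F A)"
    using insert.hyps FA Fa by (simp add: GA.finsum_insert GR_simps)
  moreover have "finsum R (\<lambda>a. rep (F a d)) (insert a A) = rep (F a d) \<oplus> finsum R (\<lambda>a. rep (F a d)) A"
  proof -
    have "(\<lambda>a. rep (F a d)) \<in> A \<rightarrow> carrier R" using FA by (auto intro: rG)
    then show ?thesis using insert.hyps Fa rG by (subst finsum_insert) auto
  qed
  moreover have "eqm d (rep (gadd (F a) (finsum GR F A) d)) (rep (F a d) \<oplus> finsum R (\<lambda>a. rep (F a d)) A)"
    using eqm_trans[OF rep_add[OF Fa GA.finsum_closed[OF FA]] eqm_add[OF rep_eqm_self[OF Fa] insert.IH[OF FA]]] .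
  ultimately show ?case by simp
qed

lemma decomp: assumes G: "G \<in> carrier GR"
  shows "G = finsum GR (\<lambda>d. ghom d (rep (G d))) {d. G d \<noteq> Fm d}"
proof -
  interpret GA: abelian_group GR by (rule GR_abelian)
  let ?S = "{d. G d \<noteq> Fm d}"
  have fS: "finite ?S" by (rule GrD_fin[OF G])
  have Pi: "(\<lambda>d. ghom d (rep (G d))) \<in> ?S \<rightarrow> carrier GR" using GrD(1)[OF G] hom_closed by blast
  show ?thesis
  proof (rule Gr_eqI[OF G])
    show "finsum GR (\<lambda>d. ghom d (rep (G d))) ?S \<in> carrier GR" by (rule GA.finsum_closed[OF Pi])
    fix d
    have "eqm d (rep (finsum GR (\<lambda>d. ghom d (rep (G d))) ?S d)) (finsum R (\<lambda>e. rep (ghom e (rep (G e)) d)) ?S)"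
      by (rule rep_finsum[OF fS Pi])
    also have "eqm d (finsum R (\<lambda>e. rep (ghom e (rep (G e)) d)) ?S) (finsum R (\<lambda>e. if e = d then rep (G d) else \<zero>) ?S)"
    proof (rule eqm_finsum[OF fS])
      fix e
      have "eqm d (rep (ghom e (rep (G e)) d)) (if d = e then rep (G e) else \<zero>)" by (rule rep_hom[OF rG[OF G]])
      then show "eqm d (rep (ghom e (rep (G e)) d)) (if e = d then rep (G d) else \<zero>)"
        by (cases "e = d") auto
    qed
    also have "finsum R (\<lambda>e. if e = d then rep (G d) else \<zero>) ?S = (if d \<in> ?S then rep (G d) else \<zero>)"
      by (rule finsum_single[OF fS rG[OF G]])
    finally have 1: "eqm d (rep (finsum GR (\<lambda>d. ghom d (rep (G d))) ?S d)) (if d \<in> ?S then rep (G d) else \<zero>)" .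
    have 2: "eqm d (rep (G d)) (if d \<in> ?S then rep (G d) else \<zero>)"
    proof (cases "d \<in> ?S")
      case True then show ?thesis using rep_eqm_self[OF G] by simp
    next
      case False
      then have "rep (G d) \<in> Fm d" using Gr_is_zero[OF G] by blast
      then have "eqm d (rep (G d)) \<zero>" using eqm_zero_iff[OF rG[OF G]] by blast
      then show ?thesis by (simp only: if_not_P[OF False])
    qed
    show "eqm d (rep (G d)) (rep (finsum GR (\<lambda>d. ghom d (rep (G d))) ?S d))"
      using eqm_trans[OF 2 eqm_sym[OF 1]] .
  qed
qed

lemma mul_zero_G: assumes K: "K \<in> carrier GR" shows "gmul K gzero = gzero" "gmul gzero K = gzero"
proof -
  show "gmul K gzero = gzero"
  proof (rule Gr_eqI[OF mul_closed_G[OF K zero_closed_G] zero_closed_G])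
    fix d
    have "MS K gzero d \<in> Fm d" by (rule MS_zero[OF K zero_closed_G]) (simp add: gzero_val)
    then have "eqm d (MS K gzero d) \<zero>" using eqm_zero_iff MS_carrier[OF K zero_closed_G] by blast
    then show "eqm d (rep (gmul K gzero d)) (rep (gzero d))"
      using rep_mul[OF K zero_closed_G] rep_zero eqm_trans eqm_sym by blast
  qed
  show "gmul gzero K = gzero"
  proof (rule Gr_eqI[OF mul_closed_G[OF zero_closed_G K] zero_closed_G])
    fix d
    have "MS gzero K d \<in> Fm d" by (rule MS_zero[OF zero_closed_G K]) (simp add: gzero_val)
    then have "eqm d (MS gzero K d) \<zero>" using eqm_zero_iff MS_carrier[OF zero_closed_G K] by blast
    then show "eqm d (rep (gmul gzero K d)) (rep (gzero d))"
      using rep_mul[OF zero_closed_G K] rep_zero eqm_trans eqm_sym by blast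
  qed
qed

lemma fs_rdistr: assumes "finite A" "F \<in> A \<rightarrow> carrier GR" "K \<in> carrier GR"
  shows "gmul K (finsum GR F A) = finsum GR (\<lambda>a. gmul K (F a)) A"
  using assms(1,2)
proof (induction A rule: finite_induct)
  case empty
  interpret GA: abelian_group GR by (rule GR_abelian)
  show ?case using mul_zero_G[OF assms(3)] by (simp add: GR_simps)
next
  case (insert a A)
  interpret GA: abelian_group GR by (rule GR_abelian)
  have FA: "F \<in> A \<rightarrow> carrier GR" and Fa: "F a \<in> carrier GR" using insert.prems by auto
  have KF: "(\<lambda>a. gmul K (F a)) \<in> A \<rightarrow> carrier GR" using FA mul_closed_G[OF assms(3)] by blast
  have "gmul K (finsum GR F (insert a A)) = gmul K (gadd (F a) (finsum GR F A))"
    using insert.hyps FA Fa by (simp add: GA.finsum_insert GR_simps)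
  also have "\<dots> = gadd (gmul K (F a)) (gmul K (finsum GR F A))"
    using r_distr_G[OF Fa _ assms(3)] GA.finsum_closed[OF FA] by (simp add: GR_simps)
  also have "\<dots> = finsum GR (\<lambda>a. gmul K (F a)) (insert a A)"
    using insert.hyps insert.IH[OF FA] KF mul_closed_G[OF assms(3) Fa] by (simp add: GA.finsum_insert GR_simps)
  finally show ?case .
qed

lemma fs_ldistr: assumes "finite A" "F \<in> A \<rightarrow> carrier GR" "K \<in> carrier GR"
  shows "gmul (finsum GR F A) K = finsum GR (\<lambda>a. gmul (F a) K) A"
  using assms(1,2)
proof (induction A rule: finite_induct)
  case empty
  interpret GA: abelian_group GR by (rule GR_abelian)
  show ?case using mul_zero_G[OF assms(3)] by (simp add: GR_simps)
next
  case (insert a A)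
  interpret GA: abelian_group GR by (rule GR_abelian)
  have FA: "F \<in> A \<rightarrow> carrier GR" and Fa: "F a \<in> carrier GR" using insert.prems by auto
  have KF: "(\<lambda>a. gmul (F a) K) \<in> A \<rightarrow> carrier GR" using FA mul_closed_G[OF _ assms(3)] by blast
  have "gmul (finsum GR F (insert a A)) K = gmul (gadd (F a) (finsum GR F A)) K"
    using insert.hyps FA Fa by (simp add: GA.finsum_insert GR_simps)
  also have "\<dots> = gadd (gmul (F a) K) (gmul (finsum GR F A) K)"
    using l_distr_G[OF Fa _ assms(3)] GA.finsum_closed[OF FA] by (simp add: GR_simps)
  also have "\<dots> = finsum GR (\<lambda>a. gmul (F a) K) (insert a A)"
    using insert.hyps insert.IH[OF FA] KF mul_closed_G[OF Fa assms(3)] by (simp add: GA.finsum_insert GR_simps)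
  finally show ?case .
qed

end


context hq begin

definition hd where "hd G = (\<lambda>d. ghom d (rep (G d)))"
definition sp where "sp G = {d. G d \<noteq> Fm d}"

lemma hd_Pi: "G \<in> carrier GR \<Longrightarrow> hd G \<in> A \<rightarrow> carrier GR"
  unfolding hd_def using GrD(1) hom_closed by blast
lemma sp_fin: "G \<in> carrier GR \<Longrightarrow> finite (sp G)"
  unfolding sp_def by (rule GrD_fin)
lemma decomp': "G \<in> carrier GR \<Longrightarrow> finsum GR (hd G) (sp G) = G"
  unfolding hd_def sp_def by (rule decomp[symmetric])
lemma hd_Fl: "G \<in> carrier GR \<Longrightarrow> \<exists>a. a \<in> Fl d \<and> hd G d = ghom d a"
  unfolding hd_def using GrD(1)[of G d] by blast

lemma one_Fl: "\<one> \<in> Fl (0, 0)"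
proof -
  have "mn 0 0 1 \<in> Fl (0, 0)" by (rule spn_mn) simp
  then show ?thesis by (simp add: mn_def)
qed

lemma pl_0: "pl (0, 0) d = d" "pl d (0, 0) = d" by (simp_all add: pl_def)
lemma pl_assoc: "pl (pl a b) c = pl a (pl b c)" by (simp add: pl_def)

lemma fsum_cong_G: "(\<And>i. i \<in> A \<Longrightarrow> F i = F' i) \<Longrightarrow> F' \<in> A \<rightarrow> carrier GR \<Longrightarrow> finsum GR F A = finsum GR F' A"
proof -
  interpret GA: abelian_group GR by (rule GR_abelian)
  show "(\<And>i. i \<in> A \<Longrightarrow> F i = F' i) \<Longrightarrow> F' \<in> A \<rightarrow> carrier GR \<Longrightarrow> finsum GR F A = finsum GR F' A"
    by (rule GA.finsum_cong') auto
qed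

lemma fsum_closed_G: "F \<in> A \<rightarrow> carrier GR \<Longrightarrow> finsum GR F A \<in> carrier GR"
proof -
  interpret GA: abelian_group GR by (rule GR_abelian)
  show "F \<in> A \<rightarrow> carrier GR \<Longrightarrow> finsum GR F A \<in> carrier GR" by (rule GA.finsum_closed)
qed

lemma l_one_G: assumes G: "G \<in> carrier GR" shows "gmul (ghom (0, 0) \<one>) G = G"
proof -
  have O: "ghom (0, 0) \<one> \<in> carrier GR" by (rule hom_closed[OF one_Fl])
  have "gmul (ghom (0, 0) \<one>) G = gmul (ghom (0, 0) \<one>) (finsum GR (hd G) (sp G))"
    using decomp'[OF G] by simp
  also have "\<dots> = finsum GR (\<lambda>d. gmul (ghom (0, 0) \<one>) (hd G d)) (sp G)"
    by (rule fs_rdistr[OF sp_fin[OF G] hd_Pi[OF G] O])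
  also have "\<dots> = finsum GR (hd G) (sp G)"
  proof (rule fsum_cong_G[OF _ hd_Pi[OF G]])
    fix d
    obtain a where a: "a \<in> Fl d" "hd G d = ghom d a" using hd_Fl[OF G] by blast
    show "gmul (ghom (0, 0) \<one>) (hd G d) = hd G d"
      unfolding a(2) hom_mul[OF one_Fl a(1)] pl_0 using Fl_carrier[OF a(1)] by simp
  qed
  also have "\<dots> = G" by (rule decomp'[OF G])
  finally show ?thesis .
qed

lemma r_one_G: assumes G: "G \<in> carrier GR" shows "gmul G (ghom (0, 0) \<one>) = G"
proof -
  have O: "ghom (0, 0) \<one> \<in> carrier GR" by (rule hom_closed[OF one_Fl])
  have "gmul G (ghom (0, 0) \<one>) = gmul (finsum GR (hd G) (sp G)) (ghom (0, 0) \<one>)"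
    using decomp'[OF G] by simp
  also have "\<dots> = finsum GR (\<lambda>d. gmul (hd G d) (ghom (0, 0) \<one>)) (sp G)"
    by (rule fs_ldistr[OF sp_fin[OF G] hd_Pi[OF G] O])
  also have "\<dots> = finsum GR (hd G) (sp G)"
  proof (rule fsum_cong_G[OF _ hd_Pi[OF G]])
    fix d
    obtain a where a: "a \<in> Fl d" "hd G d = ghom d a" using hd_Fl[OF G] by blast
    show "gmul (hd G d) (ghom (0, 0) \<one>) = hd G d"
      unfolding a(2) hom_mul[OF a(1) one_Fl] pl_0 using Fl_carrier[OF a(1)] by simp
  qed
  also have "\<dots> = G" by (rule decomp'[OF G])
  finally show ?thesis .
qed

lemma assoc_hhh: assumes "a \<in> Fl d1" "b \<in> Fl d2" "c \<in> Fl d3"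
  shows "gmul (gmul (ghom d1 a) (ghom d2 b)) (ghom d3 c) = gmul (ghom d1 a) (gmul (ghom d2 b) (ghom d3 c))"
proof -
  have ab: "a \<otimes> b \<in> Fl (pl d1 d2)" using assms by (intro Fl_mul)
  have bc: "b \<otimes> c \<in> Fl (pl d2 d3)" using assms by (intro Fl_mul)
  have cc: "a \<in> carrier R" "b \<in> carrier R" "c \<in> carrier R" using assms Fl_carrier by auto
  show ?thesis
    unfolding hom_mul[OF assms(1,2)] hom_mul[OF assms(2,3)] hom_mul[OF ab assms(3)] hom_mul[OF assms(1) bc]
    using cc by (simp add: pl_assoc m_assoc)
qed

lemma assoc_hhK: assumes "a \<in> Fl d1" "b \<in> Fl d2" and K: "K \<in> carrier GR"
  shows "gmul (gmul (ghom d1 a) (ghom d2 b)) K = gmul (ghom d1 a) (gmul (ghom d2 b) K)"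
proof -
  have A: "ghom d1 a \<in> carrier GR" and B: "ghom d2 b \<in> carrier GR" using assms hom_closed by auto
  have AB: "gmul (ghom d1 a) (ghom d2 b) \<in> carrier GR" using A B by (rule mul_closed_G)
  have PB: "(\<lambda>d. gmul (ghom d2 b) (hd K d)) \<in> sp K \<rightarrow> carrier GR"
    using hd_Pi[OF K] mul_closed_G[OF B] by blast
  have "gmul (gmul (ghom d1 a) (ghom d2 b)) K = gmul (gmul (ghom d1 a) (ghom d2 b)) (finsum GR (hd K) (sp K))"
    using decomp'[OF K] by simp
  also have "\<dots> = finsum GR (\<lambda>d. gmul (gmul (ghom d1 a) (ghom d2 b)) (hd K d)) (sp K)"
    by (rule fs_rdistr[OF sp_fin[OF K] hd_Pi[OF K] AB])
  also have "\<dots> = finsum GR (\<lambda>d. gmul (ghom d1 a) (gmul (ghom d2 b) (hd K d))) (sp K)"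
  proof (rule fsum_cong_G)
    fix d
    obtain c where c: "c \<in> Fl d" "hd K d = ghom d c" using hd_Fl[OF K] by blast
    show "gmul (gmul (ghom d1 a) (ghom d2 b)) (hd K d) = gmul (ghom d1 a) (gmul (ghom d2 b) (hd K d))"
      unfolding c(2) by (rule assoc_hhh[OF assms(1,2) c(1)])
  qed (use PB mul_closed_G[OF A] in blast)
  also have "\<dots> = gmul (ghom d1 a) (finsum GR (\<lambda>d. gmul (ghom d2 b) (hd K d)) (sp K))"
    by (rule fs_rdistr[symmetric, OF sp_fin[OF K] PB A])
  also have "\<dots> = gmul (ghom d1 a) (gmul (ghom d2 b) (finsum GR (hd K) (sp K)))"
    by (simp add: fs_rdistr[OF sp_fin[OF K] hd_Pi[OF K] B])
  also have "\<dots> = gmul (ghom d1 a) (gmul (ghom d2 b) K)" using decomp'[OF K] by simp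
  finally show ?thesis .
qed

lemma assoc_hHK: assumes "a \<in> Fl d1" and H: "H \<in> carrier GR" and K: "K \<in> carrier GR"
  shows "gmul (gmul (ghom d1 a) H) K = gmul (ghom d1 a) (gmul H K)"
proof -
  have A: "ghom d1 a \<in> carrier GR" using assms hom_closed by auto
  have HK: "gmul H K \<in> carrier GR" using H K by (rule mul_closed_G)
  have P1: "(\<lambda>d. gmul (ghom d1 a) (hd H d)) \<in> sp H \<rightarrow> carrier GR"
    using hd_Pi[OF H] mul_closed_G[OF A] by blast
  have P2: "(\<lambda>d. gmul (hd H d) K) \<in> sp H \<rightarrow> carrier GR"
    using hd_Pi[OF H] mul_closed_G[OF _ K] by blast
  have "gmul (gmul (ghom d1 a) H) K = gmul (gmul (ghom d1 a) (finsum GR (hd H) (sp H))) K"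
    using decomp'[OF H] by simp
  also have "\<dots> = gmul (finsum GR (\<lambda>d. gmul (ghom d1 a) (hd H d)) (sp H)) K"
    by (simp add: fs_rdistr[OF sp_fin[OF H] hd_Pi[OF H] A])
  also have "\<dots> = finsum GR (\<lambda>d. gmul (gmul (ghom d1 a) (hd H d)) K) (sp H)"
    by (rule fs_ldistr[OF sp_fin[OF H] P1 K])
  also have "\<dots> = finsum GR (\<lambda>d. gmul (ghom d1 a) (gmul (hd H d) K)) (sp H)"
  proof (rule fsum_cong_G)
    fix d
    obtain b where b: "b \<in> Fl d" "hd H d = ghom d b" using hd_Fl[OF H] by blast
    show "gmul (gmul (ghom d1 a) (hd H d)) K = gmul (ghom d1 a) (gmul (hd H d) K)"
      unfolding b(2) by (rule assoc_hhK[OF assms(1) b(1) K])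
  qed (use P2 mul_closed_G[OF A] in blast)
  also have "\<dots> = gmul (ghom d1 a) (finsum GR (\<lambda>d. gmul (hd H d) K) (sp H))"
    by (rule fs_rdistr[symmetric, OF sp_fin[OF H] P2 A])
  also have "\<dots> = gmul (ghom d1 a) (gmul (finsum GR (hd H) (sp H)) K)"
    by (simp add: fs_ldistr[OF sp_fin[OF H] hd_Pi[OF H] K])
  also have "\<dots> = gmul (ghom d1 a) (gmul H K)" using decomp'[OF H] by simp
  finally show ?thesis .
qed

lemma assoc_G: assumes G: "G \<in> carrier GR" and H: "H \<in> carrier GR" and K: "K \<in> carrier GR"
  shows "gmul (gmul G H) K = gmul G (gmul H K)"
proof -
  have HK: "gmul H K \<in> carrier GR" using H K by (rule mul_closed_G)
  have P1: "(\<lambda>d. gmul (hd G d) H) \<in> sp G \<rightarrow> carrier GR"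
    using hd_Pi[OF G] mul_closed_G[OF _ H] by blast
  have P2: "(\<lambda>d. gmul (hd G d) (gmul H K)) \<in> sp G \<rightarrow> carrier GR"
    using hd_Pi[OF G] mul_closed_G[OF _ HK] by blast
  have "gmul (gmul G H) K = gmul (gmul (finsum GR (hd G) (sp G)) H) K"
    using decomp'[OF G] by simp
  also have "\<dots> = gmul (finsum GR (\<lambda>d. gmul (hd G d) H) (sp G)) K"
    by (simp add: fs_ldistr[OF sp_fin[OF G] hd_Pi[OF G] H])
  also have "\<dots> = finsum GR (\<lambda>d. gmul (gmul (hd G d) H) K) (sp G)"
    by (rule fs_ldistr[OF sp_fin[OF G] P1 K])
  also have "\<dots> = finsum GR (\<lambda>d. gmul (hd G d) (gmul H K)) (sp G)"
  proof (rule fsum_cong_G[OF _ P2])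
    fix d
    obtain a where a: "a \<in> Fl d" "hd G d = ghom d a" using hd_Fl[OF G] by blast
    show "gmul (gmul (hd G d) H) K = gmul (hd G d) (gmul H K)"
      unfolding a(2) by (rule assoc_hHK[OF a(1) H K])
  qed
  also have "\<dots> = gmul (finsum GR (hd G) (sp G)) (gmul H K)"
    by (rule fs_ldistr[symmetric, OF sp_fin[OF G] hd_Pi[OF G] HK])
  also have "\<dots> = gmul G (gmul H K)" using decomp'[OF G] by simp
  finally show ?thesis .
qed

lemma GR_ring: "ring GR"
proof (rule ringI)
  show "abelian_group GR" by (rule GR_abelian)
  show "monoid GR"
    by (rule monoidI, unfold GR_simps(2,3) GR_simps(1)[symmetric])
       (auto intro: mul_closed_G hom_closed one_Fl assoc_G l_one_G r_one_G)
qed (simp_all add: GR_simps(2,5) GR_simps(1)[symmetric] l_distr_G r_distr_G)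

end


context hq begin

lemma pv_Fl: "pv p \<in> Fl (0, 0)"
proof -
  have "mn 0 0 p \<in> Fl (0, 0)" by (rule spn_mn) simp
  then show ?thesis by (simp add: mn_def)
qed

lemma emb_Fl: "emb c \<in> Fl (0, 0)" using pv_Fl[of "[:c:]"] by simp

lemma x_Fl: "x [^] (i::nat) \<in> Fl (i, 0)"
proof -
  have "mn i 0 1 \<in> Fl (i, 0)" by (rule spn_mn) simp
  then show ?thesis by (simp add: mn_def)
qed

lemma y_Fl: "y [^] (j::nat) \<in> Fl (0, j)"
proof -
  have "mn 0 j 1 \<in> Fl (0, j)" by (rule spn_mn) simp
  then show ?thesis by (simp add: mn_def)
qed

lemma pv_X: "pv [:0, 1:] = h" by (simp add: peval_pCons)

lemma h_Fl: "h [^] (i::nat) \<in> Fl (0, 0)"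
proof (induction i)
  case 0 then show ?case using one_Fl by simp
next
  case (Suc i)
  have "h [^] i \<otimes> h \<in> Fl (pl (0, 0) (0, 0))" using Suc pv_Fl[of "[:0, 1:]"] unfolding pv_X by (rule Fl_mul)
  then show ?case by (simp add: nat_pow_Suc pl_def)
qed

interpretation GRr: ring GR by (rule GR_ring)

lemma hom_pow: assumes "a \<in> Fl d" shows "ghom d a [^]\<^bsub>GR\<^esub> (n::nat) = ghom (n * fst d, n * snd d) (a [^] n)"
proof (induction n)
  case 0 then show ?case by (simp add: GR_simps)
next
  case (Suc n)
  have an: "a [^] n \<in> Fl (n * fst d, n * snd d)"
  proof (induction n)
    case 0 then show ?case using one_Fl by simp
  next
    case (Suc n)
    have "a [^] n \<otimes> a \<in> Fl (pl (n * fst d, n * snd d) d)" using Suc assms by (rule Fl_mul)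
    then show ?case by (simp add: nat_pow_Suc pl_def add.commute)
  qed
  have "ghom d a [^]\<^bsub>GR\<^esub> Suc n = gmul (ghom (n * fst d, n * snd d) (a [^] n)) (ghom d a)"
    using Suc by (simp add: GRr.nat_pow_Suc GR_simps)
  also have "\<dots> = ghom (Suc n * fst d, Suc n * snd d) (a [^] Suc n)"
    by (simp add: hom_mul[OF an assms] pl_def nat_pow_Suc add.commute)
  finally show ?case .
qed

lemma hom_finsum: "finite A \<Longrightarrow> (\<And>i. i \<in> A \<Longrightarrow> F i \<in> Fl d) \<Longrightarrow> finsum GR (\<lambda>i. ghom d (F i)) A = ghom d (finsum R F A)"
proof (induction A rule: finite_induct)
  case empty then show ?case by (simp add: hom_zero GR_simps)
next
  case (insert a A)
  have P: "(\<lambda>i. ghom d (F i)) \<in> A \<rightarrow> carrier GR" using insert hom_closed by blast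
  have PR: "F \<in> A \<rightarrow> carrier R" using insert Fl_carrier by blast
  have Fa: "F a \<in> Fl d" using insert by blast
  have "finsum GR (\<lambda>i. ghom d (F i)) (insert a A) = gadd (ghom d (F a)) (ghom d (finsum R F A))"
    using insert P hom_closed[OF Fa] by (simp add: GRr.finsum_insert GR_simps)
  also have "\<dots> = ghom d (F a \<oplus> finsum R F A)"
    by (rule hom_add[OF Fa]) (rule spn_finsum, use insert in auto)
  also have "\<dots> = ghom d (finsum R F (insert a A))"
    using insert PR Fl_carrier[OF Fa] by (simp add: finsum_insert)
  finally show ?case .
qed

abbreviation "gemb \<equiv> gr_emb R emb x y h"
abbreviation "XG \<equiv> ghom (1, 0) x"
abbreviation "YG \<equiv> ghom (0, 1) y"
abbreviation "HG \<equiv> ghom (0, 0) h"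

lemma peval_G: "peval GR gemb p HG = ghom (0, 0) (pv p)"
proof -
  have hF: "h \<in> Fl (0, 0)" using pv_Fl[of "[:0, 1:]"] unfolding pv_X .
  have t: "gemb (coeff p i) \<otimes>\<^bsub>GR\<^esub> HG [^]\<^bsub>GR\<^esub> i = ghom (0, 0) (emb (coeff p i) \<otimes> h [^] i)" for i
    unfolding gr_emb_def hom_pow[OF hF] using hom_mul[OF emb_Fl h_Fl] by (simp add: GR_simps pl_def)
  have "peval GR gemb p HG = finsum GR (\<lambda>i. ghom (0, 0) (emb (coeff p i) \<otimes> h [^] i)) {..degree p}"
    unfolding peval_def t by simp
  also have "\<dots> = ghom (0, 0) (pv p)"
    unfolding peval_def
  proof (rule hom_finsum)
    fix i show "emb (coeff p i) \<otimes> h [^] i \<in> Fl (0, 0)" using Fl_mul[OF emb_Fl h_Fl] by (simp add: pl_def)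
  qed simp
  finally show ?thesis .
qed

lemma hom_cong: "eqm d a b \<Longrightarrow> ghom d a = ghom d b"
  unfolding hom_eq
proof
  fix e assume "eqm d a b"
  then show "C e (if e = d then a else \<zero>) = C e (if e = d then b else \<zero>)"
    by (cases "e = d") (simp_all add: C_eq)
qed

lemma x_Fl1: "x \<in> Fl (1, 0)" using x_Fl[of 1] by (simp add: pow1)
lemma y_Fl1: "y \<in> Fl (0, 1)" using y_Fl[of 1] by (simp add: pow1)
lemma h_Fl1: "h \<in> Fl (0, 0)" using pv_Fl[of "[:0, 1:]"] unfolding pv_X .

lemma GR_F_algebra: "is_F_algebra GR gemb"
  unfolding is_F_algebra_def
proof (intro conjI allI ballI)
  show "ring GR" by (rule GR_ring)
  fix c d
  show "gemb c \<in> carrier GR" unfolding gr_emb_def by (rule hom_closed[OF emb_Fl])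
  show "gemb (c + d) = gemb c \<oplus>\<^bsub>GR\<^esub> gemb d"
    unfolding gr_emb_def GR_simps hom_add[OF emb_Fl emb_Fl] emb_add ..
  show "gemb (c * d) = gemb c \<otimes>\<^bsub>GR\<^esub> gemb d"
    unfolding gr_emb_def GR_simps hom_mul[OF emb_Fl emb_Fl] emb_mult by (simp add: pl_def)
  show "gemb 1 = \<one>\<^bsub>GR\<^esub>" unfolding gr_emb_def GR_simps by simp
  fix G assume G: "G \<in> carrier GR"
  have E: "ghom (0, 0) (emb c) \<in> carrier GR" by (rule hom_closed[OF emb_Fl])
  have "gmul (ghom (0, 0) (emb c)) G = gmul (ghom (0, 0) (emb c)) (finsum GR (hd G) (sp G))"
    using decomp'[OF G] by simp
  also have "\<dots> = finsum GR (\<lambda>d. gmul (ghom (0, 0) (emb c)) (hd G d)) (sp G)"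
    by (rule fs_rdistr[OF sp_fin[OF G] hd_Pi[OF G] E])
  also have "\<dots> = finsum GR (\<lambda>d. gmul (hd G d) (ghom (0, 0) (emb c))) (sp G)"
  proof (rule fsum_cong_G)
    fix d
    obtain a where a: "a \<in> Fl d" "hd G d = ghom d a" using hd_Fl[OF G] by blast
    show "gmul (ghom (0, 0) (emb c)) (hd G d) = gmul (hd G d) (ghom (0, 0) (emb c))"
      unfolding a(2) hom_mul[OF emb_Fl a(1)] hom_mul[OF a(1) emb_Fl] pl_0
      using emb_comm Fl_carrier[OF a(1)] by simp
  qed (use hd_Pi[OF G] mul_closed_G[OF _ E] in blast)
  also have "\<dots> = gmul (finsum GR (hd G) (sp G)) (ghom (0, 0) (emb c))"
    by (rule fs_ldistr[symmetric, OF sp_fin[OF G] hd_Pi[OF G] E])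
  also have "\<dots> = gmul G (ghom (0, 0) (emb c))" using decomp'[OF G] by simp
  finally show "gemb c \<otimes>\<^bsub>GR\<^esub> G = G \<otimes>\<^bsub>GR\<^esub> gemb c" unfolding gr_emb_def GR_simps .
qed

lemma rel_hx_G: "HG \<otimes>\<^bsub>GR\<^esub> XG = XG \<otimes>\<^bsub>GR\<^esub> peval GR gemb f HG"
  unfolding peval_G GR_simps hom_mul[OF h_Fl1 x_Fl1] hom_mul[OF x_Fl1 pv_Fl] rel_hx by (simp add: pl_def)

lemma rel_yh_G: "YG \<otimes>\<^bsub>GR\<^esub> HG = peval GR gemb f HG \<otimes>\<^bsub>GR\<^esub> YG"
  unfolding peval_G GR_simps hom_mul[OF y_Fl1 h_Fl1] hom_mul[OF pv_Fl y_Fl1] rel_yh by (simp add: pl_def)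

lemma rel_yx_G: "YG \<otimes>\<^bsub>GR\<^esub> XG = (gemb q \<otimes>\<^bsub>GR\<^esub> XG \<otimes>\<^bsub>GR\<^esub> YG) \<oplus>\<^bsub>GR\<^esub> peval GR gemb 0 HG"
proof -
  have ex: "emb q \<otimes> x \<in> Fl (1, 0)" using Fl_mul[OF emb_Fl x_Fl1] by (simp add: pl_def)
  have exy: "emb q \<otimes> x \<otimes> y \<in> Fl (1, 1)" using Fl_mul[OF ex y_Fl1] by (simp add: pl_def)
  have "peval GR gemb 0 HG = gzero" unfolding peval_G by (simp add: hom_zero)
  then have 1: "(gemb q \<otimes>\<^bsub>GR\<^esub> XG \<otimes>\<^bsub>GR\<^esub> YG) \<oplus>\<^bsub>GR\<^esub> peval GR gemb 0 HG = ghom (1, 1) (emb q \<otimes> x \<otimes> y)"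
    unfolding gr_emb_def GR_simps hom_mul[OF emb_Fl x_Fl1] pl_0 hom_mul[OF ex y_Fl1]
    using GRr.r_zero[of "ghom (1, 1) (emb q \<otimes> x \<otimes> y)"] hom_closed[OF exy]
    by (simp add: GR_simps pl_def)
  have 2: "YG \<otimes>\<^bsub>GR\<^esub> XG = ghom (1, 1) (y \<otimes> x)"
    unfolding GR_simps hom_mul[OF y_Fl1 x_Fl1] by (simp add: pl_def)
  have "pv g \<in> Fm (1, 1)"
  proof -
    have "mn 0 0 g \<in> Fm (1, 1)" by (rule spn_mn) simp
    then show ?thesis by (simp add: mn_def)
  qed
  moreover have "y \<otimes> x \<ominus> emb q \<otimes> x \<otimes> y = pv g"
  proof -
    have c: "emb q \<otimes> x \<otimes> y \<in> carrier R" "pv g \<in> carrier R" by simp_all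
    show ?thesis unfolding rel_yx using c by algebra
  qed
  ultimately have "eqm (1, 1) (y \<otimes> x) (emb q \<otimes> x \<otimes> y)" by (simp add: eqm_def)
  then show ?thesis unfolding 1 2 by (rule hom_cong)
qed

end


context hq begin

interpretation GRr: ring GR by (rule GR_ring)

lemma nf_single: "NF (\<lambda>a b. if (a, b) = (i, j) then p else 0) = mn i j p"
proof -
  let ?P = "\<lambda>a b. if (a, b) = (i, j) then p else 0"
  have s: "psupp ?P \<subseteq> {(i,j)}" by (auto simp: psupp_def split: if_splits)
  have "NF ?P = finsum R (\<lambda>(a,b). mn a b (?P a b)) {(i,j)}" by (rule nf_on[OF _ s]) simp
  then show ?thesis by simp
qed

lemma fin_single: "finite (psupp (\<lambda>a b. if (a, b) = (i, j) then p else 0))"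
  by (rule finite_subset[of _ "{(i,j)}"]) (auto simp: psupp_def split: if_splits)

lemma lead: assumes "a \<in> Fl (i, j)" shows "eqm (i, j) a (mn i j (NC a i j))"
proof -
  let ?Q = "NC a"
  have ac: "a \<in> carrier R" using assms by (rule Fl_carrier)
  have Qc: "finite (psupp ?Q) \<and> a = NF ?Q" by (rule nf_nfcoef[OF ac])
  note Q = conjunct1[OF Qc] sym[OF conjunct2[OF Qc]]
  have Qs: "psupp ?Q \<subseteq> {e. e \<le> (i, j)}" using assms[unfolded spn_iff] by (rule conjunct2)
  let ?S = "\<lambda>a b. if (a, b) = (i, j) then - ?Q i j else 0"
  have S: "NF ?S = \<ominus> mn i j (?Q i j)" using nf_single[of i j "- ?Q i j"] by (simp add: mn_neg)
  let ?Q' = "\<lambda>a b. ?Q a b + ?S a b"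
  have "a \<ominus> mn i j (?Q i j) = NF ?Q \<oplus> NF ?S" by (simp only: S Q(2) a_minus_def)
  also have "\<dots> = NF ?Q'" by (rule nf_add[OF Q(1) fin_single])
  finally have e: "a \<ominus> mn i j (?Q i j) = NF ?Q'" .
  have "psupp ?Q' \<subseteq> {e. e < (i, j)}"
  proof
    fix e assume e: "e \<in> psupp ?Q'"
    obtain a' b' where e': "e = (a', b')" by (cases e)
    have nz: "?Q' a' b' \<noteq> 0" using e e' by (simp add: psupp_def)
    have ne: "(a', b') \<noteq> (i, j)"
    proof
      assume eq: "(a', b') = (i, j)"
      then have "?Q' a' b' = 0" by simp
      then show False using nz by contradiction
    qed
    then have "?Q a' b' \<noteq> 0" using nz by (auto split: if_splits)
    then have "(a', b') \<in> psupp ?Q" by (simp add: psupp_def)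
    then have le: "(a', b') \<le> (i, j)" using Qs by blast
    have "(a', b') < (i, j)" using le ne by (rule le_neq_trans)
    then show "e \<in> {e. e < (i, j)}" using e' by simp
  qed
  moreover have "finite (psupp ?Q')"
    by (rule finite_subset[OF psupp_add finite_UnI[OF Q(1) fin_single]])
  ultimately have "NF ?Q' \<in> Fm (i, j)" by (intro nf_spn)
  then show ?thesis using e ac by (simp add: eqm_def)
qed

abbreviation "NG P \<equiv> nf GR gemb XG YG HG P"

lemma mn_Fl: "mn i j p \<in> Fl (i, j)" by (rule spn_mn) simp

lemma term_G: "XG [^]\<^bsub>GR\<^esub> (i::nat) \<otimes>\<^bsub>GR\<^esub> peval GR gemb p HG \<otimes>\<^bsub>GR\<^esub> YG [^]\<^bsub>GR\<^esub> (j::nat) = ghom (i, j) (mn i j p)"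
proof -
  have xp: "x [^] i \<otimes> pv p \<in> Fl (i, 0)" using Fl_mul[OF x_Fl pv_Fl] by (simp add: pl_def)
  show ?thesis
    unfolding hom_pow[OF x_Fl1] hom_pow[OF y_Fl1] peval_G GR_simps
    using hom_mul[OF x_Fl pv_Fl, of i p] hom_mul[OF xp y_Fl, of j]
    by (simp add: pl_def mn_def)
qed

lemma NG_eq: "NG P = finsum GR (\<lambda>s. ghom s (mn (fst s) (snd s) (P (fst s) (snd s)))) (psupp P)"
proof -
  have "(\<lambda>(i, j). XG [^]\<^bsub>GR\<^esub> (i::nat) \<otimes>\<^bsub>GR\<^esub> peval GR gemb (P i j) HG \<otimes>\<^bsub>GR\<^esub> YG [^]\<^bsub>GR\<^esub> (j::nat))
      = (\<lambda>s. ghom s (mn (fst s) (snd s) (P (fst s) (snd s))))"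
  proof (rule ext)
    fix s :: "nat \<times> nat"
    obtain i j where s: "s = (i, j)" by (cases s)
    show "(\<lambda>(i, j). XG [^]\<^bsub>GR\<^esub> (i::nat) \<otimes>\<^bsub>GR\<^esub> peval GR gemb (P i j) HG \<otimes>\<^bsub>GR\<^esub> YG [^]\<^bsub>GR\<^esub> (j::nat)) s
      = ghom s (mn (fst s) (snd s) (P (fst s) (snd s)))"
      unfolding s prod.case term_G fst_conv snd_conv by (rule refl)
  qed
  then show ?thesis unfolding nf_def by simp
qed

lemma NG_closed: "NG P \<in> carrier GR"
  unfolding NG_eq by (rule fsum_closed_G) (use hom_closed[OF mn_Fl] in auto)

lemma val_NG: assumes "finite (psupp P)"
  shows "eqm d (rep (NG P d)) (mn (fst d) (snd d) (P (fst d) (snd d)))"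
proof -
  let ?M = "\<lambda>s. mn (fst s) (snd s) (P (fst s) (snd s))"
  have Pi: "(\<lambda>s. ghom s (?M s)) \<in> psupp P \<rightarrow> carrier GR" using hom_closed[OF mn_Fl] by auto
  have "eqm d (rep (NG P d)) (finsum R (\<lambda>s. rep (ghom s (?M s) d)) (psupp P))"
    unfolding NG_eq by (rule rep_finsum[OF assms Pi])
  also have "eqm d (finsum R (\<lambda>s. rep (ghom s (?M s) d)) (psupp P)) (finsum R (\<lambda>s. if s = d then ?M d else \<zero>) (psupp P))"
  proof (rule eqm_finsum[OF assms])
    fix s
    have "eqm d (rep (ghom s (?M s) d)) (if d = s then ?M s else \<zero>)" by (rule rep_hom) simp
    then show "eqm d (rep (ghom s (?M s) d)) (if s = d then ?M d else \<zero>)" by (cases "s = d") auto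
  qed
  also have "finsum R (\<lambda>s. if s = d then ?M d else \<zero>) (psupp P) = (if d \<in> psupp P then ?M d else \<zero>)"
    by (rule finsum_single[OF assms]) simp
  also have "\<dots> = ?M d" by (cases d) (auto simp: psupp_def)
  finally show ?thesis .
qed

lemma NG_exists: assumes G: "G \<in> carrier GR"
  shows "finite (psupp (\<lambda>i j. NC (rep (G (i, j))) i j)) \<and> G = NG (\<lambda>i j. NC (rep (G (i, j))) i j)"
proof
  let ?P = "\<lambda>i j. NC (rep (G (i, j))) i j"
  have "psupp ?P \<subseteq> sp G"
  proof
    fix e assume e: "e \<in> psupp ?P"
    obtain i j where e': "e = (i, j)" by (cases e)
    show "e \<in> sp G"
    proof (rule ccontr)
      assume "e \<notin> sp G"
      then have "G (i, j) = Fm (i, j)" using e' by (simp add: sp_def)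
      then have "rep (G (i, j)) \<in> Fm (i, j)" using Gr_is_zero[OF G, of "(i, j)"] by blast
      then have "psupp (NC (rep (G (i, j)))) \<subseteq> {e. e < (i, j)}" unfolding spn_iff by (rule conjunct2)
      then have "NC (rep (G (i, j))) i j = 0" by (auto simp: psupp_def)
      then show False using e e' by (auto simp: psupp_def)
    qed
  qed
  then show fP: "finite (psupp ?P)" using sp_fin[OF G] by (rule finite_subset)
  show "G = NG ?P"
  proof (rule Gr_eqI[OF G NG_closed])
    fix d :: "nat \<times> nat"
    obtain i j where d: "d = (i, j)" by (cases d)
    have 1: "eqm d (rep (G d)) (mn i j (?P i j))" unfolding d by (rule lead[OF GrD(1)[OF G]])
    have 2: "eqm d (rep (NG ?P d)) (mn i j (?P i j))" using val_NG[OF fP, of d] d by simp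
    show "eqm d (rep (G d)) (rep (NG ?P d))" using eqm_trans[OF 1 eqm_sym[OF 2]] .
  qed
qed

lemma NG_unique: assumes "finite (psupp P)" "finite (psupp P')" "NG P = NG P'"
  shows "P = P'"
proof (intro ext)
  fix i j
  have 1: "eqm (i, j) (rep (NG P (i, j))) (mn i j (P i j))" using val_NG[OF assms(1), of "(i, j)"] by simp
  have 2: "eqm (i, j) (rep (NG P (i, j))) (mn i j (P' i j))" using val_NG[OF assms(2), of "(i, j)"] assms(3) by simp
  have "eqm (i, j) (mn i j (P i j)) (mn i j (P' i j))" using eqm_trans[OF eqm_sym[OF 1] 2] .
  then have "mn i j (P i j) \<ominus> mn i j (P' i j) \<in> Fm (i, j)" by (simp add: eqm_def)
  moreover have "mn i j (P i j) \<ominus> mn i j (P' i j) = mn i j (P i j - P' i j)"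
    using mn_add[of i j "P i j" "- P' i j"] by (simp add: mn_neg a_minus_def)
  ultimately have "mn i j (P i j - P' i j) \<in> Fm (i, j)" by simp
  then have "NF (\<lambda>a b. if (a, b) = (i, j) then P i j - P' i j else 0) \<in> Fm (i, j)"
    by (simp only: nf_single)
  then have "psupp (NC (NF (\<lambda>a b. if (a, b) = (i, j) then P i j - P' i j else 0))) \<subseteq> {e. e < (i, j)}"
    unfolding spn_iff by (rule conjunct2)
  then have "psupp (\<lambda>a b. if (a, b) = (i, j) then P i j - P' i j else 0) \<subseteq> {e. e < (i, j)}"
    using nfcoef_nf[OF fin_single] by simp
  then have sub: "psupp (\<lambda>a b. if (a, b) = (i, j) then P i j - P' i j else 0) \<subseteq> {e. e < (i, j)}" .
  show "P i j = P' i j"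
  proof (rule ccontr)
    assume "P i j \<noteq> P' i j"
    then have "(i, j) \<in> psupp (\<lambda>a b. if (a, b) = (i, j) then P i j - P' i j else 0)"
      by (simp add: psupp_def)
    then have "(i, j) < (i, j)" using sub by blast
    then show False by simp
  qed
qed

lemma GR_Hq: "is_Hq GR gemb q f 0 XG YG HG"
  unfolding is_Hq_def
proof (intro conjI ballI)
  show "is_F_algebra GR gemb" by (rule GR_F_algebra)
  show "XG \<in> carrier GR" by (rule hom_closed[OF x_Fl1])
  show "YG \<in> carrier GR" by (rule hom_closed[OF y_Fl1])
  show "HG \<in> carrier GR" by (rule hom_closed[OF h_Fl1])
  show "HG \<otimes>\<^bsub>GR\<^esub> XG = XG \<otimes>\<^bsub>GR\<^esub> peval GR gemb f HG" by (rule rel_hx_G)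
  show "YG \<otimes>\<^bsub>GR\<^esub> HG = peval GR gemb f HG \<otimes>\<^bsub>GR\<^esub> YG" by (rule rel_yh_G)
  show "YG \<otimes>\<^bsub>GR\<^esub> XG = (gemb q \<otimes>\<^bsub>GR\<^esub> XG \<otimes>\<^bsub>GR\<^esub> YG) \<oplus>\<^bsub>GR\<^esub> peval GR gemb 0 HG" by (rule rel_yx_G)
  fix G assume G: "G \<in> carrier GR"
  show "\<exists>!P. finite (psupp P) \<and> G = NG P"
    using NG_exists[OF G] NG_unique by blast
qed

end

theorem mainTheorem3:
  fixes R :: "'a ring" and emb :: "'k::field \<Rightarrow> 'a"
    and q :: 'k and f g :: "'k poly" and x y h :: 'a
  assumes "is_Hq R emb q f g x y h"
  shows "is_Hq (Gr R emb x y h) (gr_emb R emb x y h) q f 0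
           (gr_hom R emb x y h (1, 0) x)
           (gr_hom R emb x y h (0, 1) y)
           (gr_hom R emb x y h (0, 0) h)"
proof -
  interpret hq R emb q f g x y h by unfold_locales (rule assms)
  show ?thesis by (rule GR_Hq)
qed


end
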